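(* Let $k$ be a positive integer, $\mathfrak A$ a finite structure with domain $A$ of size $n$, $\vec x_1,\vec x_2$ tuples of variables of length $m$, and $\mathbb X\colon X\to\mathbb R_{\ge0}$ a weighted team whose variable domain contains the variables of $\vec x_1,\vec x_2$ but none of the fresh variables $\vec u=(u_1,\dots,u_m)$, $v_1,v_2$, $\vec z_0=(z_{0,1},\dots,z_{0,k})$, $\vec z=(z_1,\dots,z_k)$. Let $y$ be a variable of $\vec u$ and $\vec y$ the $k$-tuple $(y,\dots,y)$, and define $$\psi^k(\vec x_1,\vec x_2):=\forall\vec u\,\exists v_1v_2\,\forall\vec z_0\,\exists\vec z\,\big((\vec x_1=\vec u\leftrightarrow v_1=y)\wedge(\vec x_2=\vec u\leftrightarrow v_2=y)\wedge(\vec z_0=\vec y\to\vec z=\vec y)\wedge(\neg\,\vec z=\vec y\vee\vec u v_1\approx\vec u v_2)\big).$$ (i) If $\mathfrak A\models^w_{\mathbb X}\vec x_1\subseteq\vec x_2\wedge\vec x_2\subseteq\vec x_1$, $|\mathbb X_{\vec x_1=\vec x_2}|=0$, and $\mathbb X(s)\ge|\mathbb X|/n^k$ for all $s\in\mathrm{supp}(\mathbb X)$, then $\mathfrak A\models^w_{\mathbb X}\psi^k(\vec x_1,\vec x_2)$. (ii) If $\mathfrak A\models^w_{\mathbb X}\psi^k(\vec x_1,\vec x_2)$, then $\mathfrak A\models^w_{\mathbb X}\vec x_1\subseteq\vec x_2\wedge\vec x_2\subseteq\vec x_1$.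
   Context: Teams. A team $X$ is a finite set of assignments $s\colon D\to A$ for a finite set $D$ of first-order variables (its variable domain). A weighted team is any function $\mathbb X\colon X\to\mathbb R_{\ge0}$. Write $\mathrm{supp}(\mathbb X)=\{s:\mathbb X(s)>0\}$, $|\mathbb X|=\sum_s\mathbb X(s)$, and for a first-order formula $\alpha$, $\mathbb X_\alpha$ is the restriction of $\mathbb X$ to assignments satisfying $\alpha$; e.g. $|\mathbb X_{\vec x=\vec a}|$ is the total weight of assignments mapping $\vec x$ to $\vec a$. Sums of teams are pointwise. The marginal of $\mathbb X$ on a variable set $V$ is $s\mapsto\sum_{t\upharpoonright V=s}\mathbb X(t)$. For a variable $x$ and finite set $A$, $\mathbb X[A/x]$ is the team on all assignments $s$ over $\mathrm{Dom}(\mathbb X)\cup\{x\}$ with $s(x)\in A$ whose restriction to $\mathrm{Dom}(\mathbb X)\setminus\{x\}$ lies in the support of the marginal $\mathbb X'$ of $\mathbb X$ on $\mathrm{Dom}(\mathbb X)\setminus\{x\}$, given by $s\mapsto\mathbb X'(s\upharpoonright(\mathrm{Dom}(\mathbb X)\setminus\{x\}))/|A|$. Weighted semantics. Formulae are in negation normal form; for first-order $\alpha$, $\alpha^\bot$ is the negation normal form of $\neg\alpha$, $\alpha\to\psi$ abbreviates $\alpha^\bot\vee(\alpha\wedge\psi)$, $\alpha\leftrightarrow\beta$ (for first-order $\alpha,\beta$) abbreviates $(\alpha\wedge\beta)\vee(\alpha^\bot\wedge\beta^\bot)$, and $\vec x=\vec u$ abbreviates the conjunction of the componentwise equalities. For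 a structure $\mathfrak A$ with domain $A$ and weighted team $\mathbb X$: $\mathfrak A\models^w_{\mathbb X}l$ for a first-order literal $l$ iff $\mathfrak A\models_s l$ for all $s\in\mathrm{supp}(\mathbb X)$; $\wedge$ is conjunction of the conditions; $\mathfrak A\models^w_{\mathbb X}\psi\vee\theta$ iff $\mathbb X=\mathbb Y+\mathbb Z$ for weighted teams $\mathbb Y,\mathbb Z$ with $\mathfrak A\models^w_{\mathbb Y}\psi$ and $\mathfrak A\models^w_{\mathbb Z}\theta$; $\mathfrak A\models^w_{\mathbb X}\forall x\psi$ iff $\mathfrak A\models^w_{\mathbb X[A/x]}\psi$; $\mathfrak A\models^w_{\mathbb X}\exists x\psi$ iff $\mathfrak A\models^w_{\mathbb Y}\psi$ for some weighted team $\mathbb Y$ over $\mathrm{Dom}(\mathbb X)\cup\{x\}$ with $x$-values in $A$ whose marginal on $\mathrm{Dom}(\mathbb X)\setminus\{x\}$ equals that of $\mathbb X$. Atoms: marginal identity $\vec x\approx\vec y$ ($\vec x,\vec y$ of equal length $k$) holds iff $|\mathbb X_{\vec x=\vec a}|=|\mathbb X_{\vec y=\vec a}|$ for all $\vec a\in A^k$; inclusion $\vec x\subseteq\vec y$ holds iff for every $s\in\mathrm{supp}(\mathbb X)$ there is $s'\in\mathrm{supp}(\mathbb X)$ with $s(\vec x)=s'(\vec y)$. *)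

theory Defs
  imports Complex_Main
begin

text \<open>Formulae in negation normal form. Since the formula of the theorem uses no
non-logical symbols, first-order literals are equalities and inequalities of variables.
Assignments are partial maps from variables to values; a weighted team is given by
its variable domain D and a weight function on assignments.\<close>

datatype 'v fml =
    Eq 'v 'v
  | Neq 'v 'v
  | And "'v fml" "'v fml"
  | Or "'v fml" "'v fml"
  | All 'v "'v fml"
  | Ex 'v "'v fml"
  | MargId "'v list" "'v list"
  | Incl "'v list" "'v list"

fun fo_neg :: "'v fml \<Rightarrow> 'v fml" where
  "fo_neg (Eq x y) = Neq x y"
| "fo_neg (Neq x y) = Eq x y"
| "fo_neg (And a b) = Or (fo_neg a) (fo_neg b)"
| "fo_neg (Or a b) = And (fo_neg a) (fo_neg b)"
| "fo_neg (All x a) = Ex x (fo_neg a)"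
| "fo_neg (Ex x a) = All x (fo_neg a)"
| "fo_neg (MargId xs ys) = MargId xs ys"
| "fo_neg (Incl xs ys) = Incl xs ys"

definition imp :: "'v fml \<Rightarrow> 'v fml \<Rightarrow> 'v fml" where
  "imp a p = Or (fo_neg a) (And a p)"

definition iff :: "'v fml \<Rightarrow> 'v fml \<Rightarrow> 'v fml" where
  "iff a b = Or (And a b) (And (fo_neg a) (fo_neg b))"

fun eqs :: "'v list \<Rightarrow> 'v list \<Rightarrow> 'v fml" where
  "eqs [x] [y] = Eq x y"
| "eqs (x # xs) (y # ys) = And (Eq x y) (eqs xs ys)"
| "eqs _ _ = Eq undefined undefined"

definition Alls :: "'v list \<Rightarrow> 'v fml \<Rightarrow> 'v fml" where
  "Alls xs p = foldr All xs p"

definition Exs :: "'v list \<Rightarrow> 'v fml \<Rightarrow> 'v fml" where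
  "Exs xs p = foldr Ex xs p"

type_synonym ('v, 'a) assign = "'v \<rightharpoonup> 'a"

definition wteam :: "'a set \<Rightarrow> 'v set \<Rightarrow> (('v,'a) assign \<Rightarrow> real) \<Rightarrow> bool" where
  "wteam A D w \<longleftrightarrow> (\<forall>s. w s \<ge> 0) \<and> finite {s. w s \<noteq> 0}
      \<and> (\<forall>s. w s \<noteq> 0 \<longrightarrow> dom s = D \<and> ran s \<subseteq> A)"

text \<open>Total weight of the assignments satisfying P, i.e. the size of the restriction.\<close>
definition tw :: "(('v,'a) assign \<Rightarrow> real) \<Rightarrow> (('v,'a) assign \<Rightarrow> bool) \<Rightarrow> real" where
  "tw w P = (\<Sum>s\<in>{s. w s \<noteq> 0 \<and> P s}. w s)"

definition size_wt :: "(('v,'a) assign \<Rightarrow> real) \<Rightarrow> real" where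
  "size_wt w = tw w (\<lambda>_. True)"

definition marg :: "(('v,'a) assign \<Rightarrow> real) \<Rightarrow> 'v set \<Rightarrow> ('v,'a) assign \<Rightarrow> real" where
  "marg w V t = tw w (\<lambda>s. s |` V = t)"

definition dup :: "'a set \<Rightarrow> 'v set \<Rightarrow> (('v,'a) assign \<Rightarrow> real) \<Rightarrow> 'v
                   \<Rightarrow> ('v,'a) assign \<Rightarrow> real" where
  "dup A D w x s = (if dom s = insert x D \<and> s x \<in> Some ` A
                       \<and> marg w (D - {x}) (s |` (D - {x})) > 0
                    then marg w (D - {x}) (s |` (D - {x})) / real (card A) else 0)"

fun sat :: "'a set \<Rightarrow> 'v set \<Rightarrow> (('v,'a) assign \<Rightarrow> real) \<Rightarrow> 'v fml \<Rightarrow> bool" where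
  "sat A D w (Eq x y) = (\<forall>s. w s > 0 \<longrightarrow> s x = s y)"
| "sat A D w (Neq x y) = (\<forall>s. w s > 0 \<longrightarrow> s x \<noteq> s y)"
| "sat A D w (And p q) = (sat A D w p \<and> sat A D w q)"
| "sat A D w (Or p q) = (\<exists>w1 w2. wteam A D w1 \<and> wteam A D w2 \<and>
        (\<forall>s. w s = w1 s + w2 s) \<and> sat A D w1 p \<and> sat A D w2 q)"
| "sat A D w (All x p) = sat A (insert x D) (dup A D w x) p"
| "sat A D w (Ex x p) = (\<exists>w'. wteam A (insert x D) w' \<and>
        (\<forall>t. marg w' (D - {x}) t = marg w (D - {x}) t) \<and> sat A (insert x D) w' p)"
| "sat A D w (MargId xs ys) = (\<forall>as. length as = length xs \<and> set as \<subseteq> A \<longrightarrow>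
        tw w (\<lambda>s. map s xs = map Some as) = tw w (\<lambda>s. map s ys = map Some as))"
| "sat A D w (Incl xs ys) = (\<forall>s. w s > 0 \<longrightarrow> (\<exists>s'. w s' > 0 \<and> map s xs = map s' ys))"

definition psi :: "'v list \<Rightarrow> 'v list \<Rightarrow> 'v list \<Rightarrow> 'v \<Rightarrow> 'v \<Rightarrow> 'v list \<Rightarrow> 'v list
                   \<Rightarrow> 'v \<Rightarrow> 'v fml" where
  "psi x1 x2 u v1 v2 z0 z y =
     (let ys = replicate (length z) y in
      Alls u (Ex v1 (Ex v2 (Alls z0 (Exs z
        (And (iff (eqs x1 u) (Eq v1 y))
         (And (iff (eqs x2 u) (Eq v2 y))
          (And (imp (eqs z0 ys) (eqs z ys))
               (Or (fo_neg (eqs z ys)) (MargId (u @ [v1]) (u @ [v2])))))))))))"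

end

theory Submission
  imports Defs
begin


lemma wteam_nonneg: "wteam A D w \<Longrightarrow> 0 \<le> w s" by (simp add: wteam_def)
lemma wteam_fin: "wteam A D w \<Longrightarrow> finite {s. w s \<noteq> 0}" by (simp add: wteam_def)
lemma wteam_dom: "wteam A D w \<Longrightarrow> w s \<noteq> 0 \<Longrightarrow> dom s = D" by (simp add: wteam_def)
lemma wteam_ran: "wteam A D w \<Longrightarrow> w s \<noteq> 0 \<Longrightarrow> ran s \<subseteq> A" by (simp add: wteam_def)
lemma wteam_pos: "wteam A D w \<Longrightarrow> (w s \<noteq> 0) = (w s > 0)"
  using wteam_nonneg[of A D w s] by auto

lemma restrict_dom_id:
  assumes "dom s \<subseteq> D" shows "s |` D = s"
proof (rule ext)
  fix x show "(s |` D) x = s x"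
  proof (cases "x \<in> D")
    case False
    then have "x \<notin> dom s" using assms by blast
    then show ?thesis using False by (simp add: restrict_map_def domIff)
  qed (simp add: restrict_map_def)
qed

lemma tw_superset:
  assumes "finite S" "{s. w s \<noteq> 0} \<subseteq> S"
  shows "tw w P = (\<Sum>s\<in>{s\<in>S. P s}. w s)"
  unfolding tw_def
  by (rule sum.mono_neutral_left) (use assms in \<open>auto intro: finite_subset\<close>)

lemma tw_nonneg: "wteam A D w \<Longrightarrow> 0 \<le> tw w P"
  unfolding tw_def by (rule sum_nonneg) (simp add: wteam_nonneg)

lemma tw_pos:
  assumes "wteam A D w"
  shows "(tw w P > 0) = (\<exists>s. w s > 0 \<and> P s)"
proof
  assume "tw w P > 0"
  then have "{s. w s \<noteq> 0 \<and> P s} \<noteq> {}" unfolding tw_def by (metis less_irrefl sum.empty)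
  then show "\<exists>s. w s > 0 \<and> P s" using wteam_pos[OF assms] by auto
next
  assume "\<exists>s. w s > 0 \<and> P s"
  then obtain s where s: "w s > 0" "P s" by auto
  have fin: "finite {s. w s \<noteq> 0 \<and> P s}" using wteam_fin[OF assms] by (auto intro: finite_subset)
  have "w s \<le> tw w P" unfolding tw_def
    by (rule member_le_sum) (use s fin wteam_nonneg[OF assms] in auto)
  with s show "tw w P > 0" by simp
qed

lemma tw_zero_fun: "tw (\<lambda>_. 0) P = 0" by (simp add: tw_def)

lemma tw_tower:
  assumes w: "wteam A D w"
  shows "tw w (\<lambda>s. P (s |` V)) = tw (marg w V) P"
proof -
  let ?S = "{s. w s \<noteq> 0 \<and> P (s |` V)}"
  let ?R = "{r. marg w V r \<noteq> 0 \<and> P r}"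
  let ?g = "\<lambda>s. s |` V"
  have finS: "finite ?S" using wteam_fin[OF w] by (auto intro: finite_subset)
  have "?R \<subseteq> ?g ` {s. w s \<noteq> 0}"
  proof
    fix r assume "r \<in> ?R"
    then have nz: "marg w V r \<noteq> 0" by simp
    have "0 \<le> marg w V r" unfolding marg_def by (rule tw_nonneg[OF w])
    then have "marg w V r > 0" using nz by linarith
    then obtain s where "w s > 0" "s |` V = r" unfolding marg_def using tw_pos[OF w] by auto
    then show "r \<in> ?g ` {s. w s \<noteq> 0}" by auto
  qed
  then have finR: "finite ?R" using wteam_fin[OF w] by (auto intro: finite_subset)
  have sub: "?g ` ?S \<subseteq> ?R"
  proof
    fix r assume "r \<in> ?g ` ?S"
    then obtain s where s: "w s \<noteq> 0" "P (s |` V)" "r = s |` V" by auto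
    then have "marg w V r > 0" unfolding marg_def using tw_pos[OF w] wteam_pos[OF w] by auto
    with s show "r \<in> ?R" by auto
  qed
  have "tw (marg w V) P = (\<Sum>r\<in>?R. \<Sum>s\<in>{s. w s \<noteq> 0 \<and> s |` V = r}. w s)"
    by (simp only: tw_def marg_def)
  also have "\<dots> = (\<Sum>r\<in>?R. \<Sum>s\<in>{s\<in>?S. ?g s = r}. w s)"
  proof (rule sum.cong[OF refl])
    fix r assume "r \<in> ?R"
    then have "{s. w s \<noteq> 0 \<and> s |` V = r} = {s\<in>?S. ?g s = r}" by auto
    then show "(\<Sum>s\<in>{s. w s \<noteq> 0 \<and> s |` V = r}. w s) = (\<Sum>s\<in>{s\<in>?S. ?g s = r}. w s)" by simp
  qed
  also have "\<dots> = sum w ?S" by (rule sum.group[OF finS finR sub, of w])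
  finally have e1: "tw (marg w V) P = sum w ?S" .
  have e2: "tw w (\<lambda>s. P (s |` V)) = sum w ?S" unfolding tw_def by (rule refl)
  show ?thesis by (rule trans[OF e2 e1[symmetric]])
qed

lemma marg_self:
  assumes w: "wteam A D w" shows "marg w D t = w t"
proof -
  have r: "s |` D = s" if "w s \<noteq> 0" for s using restrict_dom_id[of s D] wteam_dom[OF w that] by simp
  show ?thesis
  proof (cases "w t = 0")
    case True
    have e: "{s. w s \<noteq> 0 \<and> s |` D = t} = {}" using True r by auto
    show ?thesis unfolding marg_def tw_def e using True by simp
  next
    case False
    have e: "{s. w s \<noteq> 0 \<and> s |` D = t} = {t}" using False r by auto
    show ?thesis unfolding marg_def tw_def e by simp
  qed
qed

lemma wteam_marg:
  assumes w: "wteam A D w" and "V \<subseteq> D"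
  shows "wteam A V (marg w V)"
proof -
  have ex: "\<exists>s. w s > 0 \<and> s |` V = r" if "marg w V r \<noteq> 0" for r
  proof -
    have "marg w V r > 0" using that tw_nonneg[OF w] unfolding marg_def
      by (metis less_eq_real_def)
    then show ?thesis unfolding marg_def using tw_pos[OF w] by auto
  qed
  have "{r. marg w V r \<noteq> 0} \<subseteq> (\<lambda>s. s |` V) ` {s. w s \<noteq> 0}"
  proof
    fix r assume "r \<in> {r. marg w V r \<noteq> 0}"
    then obtain s where "w s > 0" "s |` V = r" using ex by blast
    then show "r \<in> (\<lambda>s. s |` V) ` {s. w s \<noteq> 0}" by (intro image_eqI[of _ _ s]) auto
  qed
  then have fin: "finite {r. marg w V r \<noteq> 0}" using wteam_fin[OF w] by (auto intro: finite_subset)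
  have dr: "dom r = V \<and> ran r \<subseteq> A" if nz: "marg w V r \<noteq> 0" for r
  proof -
    obtain s where s: "w s > 0" "s |` V = r" using ex[OF nz] by blast
    then have ds: "dom s = D" "ran s \<subseteq> A" using wteam_dom[OF w] wteam_ran[OF w] by auto
    have "dom r = V" using s(2) ds(1) assms(2) dom_restrict[of s V] by auto
    moreover have "ran r \<subseteq> A"
    proof
      fix b assume "b \<in> ran r"
      then obtain x where "r x = Some b" by (auto simp: ran_def)
      then have "s x = Some b" using s(2) by (auto simp: restrict_map_def split: if_splits)
      then show "b \<in> A" using ds(2) by (auto simp: ran_def)
    qed
    ultimately show ?thesis by simp
  qed
  have nn: "\<forall>r. 0 \<le> marg w V r" unfolding marg_def using tw_nonneg[OF w] by blast
  show ?thesis unfolding wteam_def using nn fin dr by blast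
qed

lemma marg_tower:
  assumes w: "wteam A D w" and "W \<subseteq> V"
  shows "marg (marg w V) W t = marg w W t"
proof -
  have "marg (marg w V) W t = tw w (\<lambda>s. (s |` V) |` W = t)"
    unfolding marg_def[of "marg w V"] using tw_tower[OF w, of "\<lambda>r. r |` W = t" V] by simp
  also have "\<dots> = marg w W t" using assms(2) by (simp add: marg_def Int_absorb1 inf.commute)
  finally show ?thesis .
qed

lemma marg_pos:
  assumes "wteam A D w" shows "(marg w V r > 0) = (\<exists>s. w s > 0 \<and> s |` V = r)"
  unfolding marg_def using tw_pos[OF assms] by simp

lemma sat_zero: "sat A D (\<lambda>_. 0) p"
proof (induction p arbitrary: D)
  case (Or p q) then show ?case by (auto simp: wteam_def intro!: exI[of _ "\<lambda>_. 0"])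
next
  case (All x p)
  have "dup A D (\<lambda>_. 0) x = (\<lambda>_. 0)" by (auto simp: dup_def marg_def tw_def)
  then show ?case using All by simp
next
  case (Ex x p)
  then show ?case by (auto simp: wteam_def marg_def tw_def intro!: exI[of _ "\<lambda>_. 0"])
qed (auto simp: tw_def)




fun qf :: "'v fml \<Rightarrow> bool" where
  "qf (Eq x y) = True" | "qf (Neq x y) = True" | "qf (And p q) = (qf p \<and> qf q)"
| "qf (Or p q) = (qf p \<and> qf q)" | "qf (All x p) = False" | "qf (Ex x p) = False"
| "qf (MargId xs ys) = False" | "qf (Incl xs ys) = False"

fun holds :: "('v,'a) assign \<Rightarrow> 'v fml \<Rightarrow> bool" where
  "holds s (Eq x y) = (s x = s y)" | "holds s (Neq x y) = (s x \<noteq> s y)"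
| "holds s (And p q) = (holds s p \<and> holds s q)" | "holds s (Or p q) = (holds s p \<or> holds s q)"
| "holds s (All x p) = True" | "holds s (Ex x p) = True"
| "holds s (MargId xs ys) = True" | "holds s (Incl xs ys) = True"

lemma flat:
  assumes "qf p" "wteam A D w"
  shows "sat A D w p = (\<forall>s. w s > 0 \<longrightarrow> holds s p)"
  using assms
proof (induction p arbitrary: w)
  case (Or p q)
  show ?case
  proof
    assume "sat A D w (Or p q)"
    then obtain w1 w2 where h: "wteam A D w1" "wteam A D w2" "\<forall>s. w s = w1 s + w2 s"
      "sat A D w1 p" "sat A D w2 q" by auto
    have hp: "\<forall>s. w1 s > 0 \<longrightarrow> holds s p" using Or h by auto
    have hq: "\<forall>s. w2 s > 0 \<longrightarrow> holds s q" using Or h by auto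
    show "\<forall>s. w s > 0 \<longrightarrow> holds s (Or p q)"
    proof (intro allI impI)
      fix s assume "w s > 0"
      then have "w1 s > 0 \<or> w2 s > 0" using h(3) wteam_nonneg[OF h(1), of s] wteam_nonneg[OF h(2), of s]
        by auto
      then show "holds s (Or p q)" using hp hq by auto
    qed
  next
    assume a: "\<forall>s. w s > 0 \<longrightarrow> holds s (Or p q)"
    define w1 where "w1 = (\<lambda>s. if holds s p then w s else 0)"
    define w2 where "w2 = (\<lambda>s. if holds s p then 0 else w s)"
    have t1: "wteam A D w1" using Or.prems(2) unfolding wteam_def w1_def
      by (auto intro: finite_subset[of _ "{s. w s \<noteq> 0}"])
    have t2: "wteam A D w2" using Or.prems(2) unfolding wteam_def w2_def
      by (auto intro: finite_subset[of _ "{s. w s \<noteq> 0}"])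
    have s1: "sat A D w1 p" using Or t1 by (auto simp: w1_def)
    have s2: "sat A D w2 q" using Or t2 a by (auto simp: w2_def split: if_splits)
    have "\<forall>s. w s = w1 s + w2 s" by (simp add: w1_def w2_def)
    then show "sat A D w (Or p q)" using t1 t2 s1 s2 unfolding sat.simps(4) by blast
  qed
qed auto

lemma qf_neg: "qf p \<Longrightarrow> qf (fo_neg p) \<and> (holds s (fo_neg p) = (\<not> holds s p))"
  by (induction p) auto

lemma qf_eqs: "qf (eqs xs ys)"
  by (induction xs ys rule: eqs.induct) auto

lemma holds_eqs: "length xs = length ys \<Longrightarrow> holds s (eqs xs ys) = (map s xs = map s ys)"
  by (induction xs ys rule: eqs.induct) auto

definition L :: "'a set \<Rightarrow> 'v set \<Rightarrow> 'v set \<Rightarrow> (('v,'a) assign \<Rightarrow> real) \<Rightarrow> ('v,'a) assign \<Rightarrow> real" where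
  "L A D U w t = (if dom t = D \<union> U \<and> (\<forall>x\<in>U. t x \<in> Some ` A) then w (t |` D) / real (card A) ^ card U else 0)"

lemma wteam_L:
  assumes w: "wteam A D w" and fin: "finite D" "finite U" "finite A"
  shows "wteam A (D \<union> U) (L A D U w)"
proof -
  have dr: "dom t = D \<union> U \<and> ran t \<subseteq> A" if nz: "L A D U w t \<noteq> 0" for t
  proof -
    have c: "dom t = D \<union> U" "\<forall>x\<in>U. t x \<in> Some ` A" "w (t |` D) \<noteq> 0"
      using nz by (auto simp: L_def split: if_splits)
    have rr: "ran (t |` D) \<subseteq> A" using wteam_ran[OF w c(3)] .
    have "ran t \<subseteq> A"
    proof
      fix b assume "b \<in> ran t"
      then obtain x where x: "t x = Some b" by (auto simp: ran_def)
      show "b \<in> A"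
      proof (cases "x \<in> D")
        case True
        then have "(t |` D) x = Some b" using x by simp
        then show ?thesis using rr by (auto simp: ran_def)
      next
        case False
        then have "x \<in> U" using x c(1) by auto
        then show ?thesis using c(2) x by force
      qed
    qed
    with c show ?thesis by simp
  qed
  have "{t. L A D U w t \<noteq> 0} \<subseteq> {m. dom m = D \<union> U \<and> ran m \<subseteq> A}" using dr by blast
  then have "finite {t. L A D U w t \<noteq> 0}"
    using finite_set_of_finite_maps[of "D \<union> U" A] fin by (auto intro: finite_subset)
  moreover have "\<forall>t. 0 \<le> L A D U w t" unfolding L_def using wteam_nonneg[OF w] by auto
  ultimately show ?thesis unfolding wteam_def using dr by blast
qed

lemma dup_L:
  assumes w: "wteam A D w" and "x \<notin> D"
  shows "dup A D w x = L A D {x} w"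
proof
  fix s
  have D: "D - {x} = D" using assms(2) by auto
  have "marg w D (s |` D) = w (s |` D)" by (rule marg_self[OF w])
  moreover have "0 \<le> w (s |` D)" by (rule wteam_nonneg[OF w])
  ultimately show "dup A D w x s = L A D {x} w s"
    unfolding dup_def L_def D by (auto simp: insert_commute)
qed

lemma L_empty: assumes w: "wteam A D w" shows "L A D {} w = w"
proof
  fix t show "L A D {} w t = w t"
  proof (cases "dom t = D")
    case True then show ?thesis using restrict_dom_id[of t D] by (simp add: L_def)
  next
    case False then have "w t = 0" using wteam_dom[OF w] by blast
    then show ?thesis using False by (simp add: L_def)
  qed
qed

lemma L_comp:
  assumes "U1 \<inter> D = {}" "U2 \<inter> (D \<union> U1) = {}" "finite U1" "finite U2"
  shows "L A (D \<union> U1) U2 (L A D U1 w) = L A D (U1 \<union> U2) w"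
proof
  fix t
  have "U1 \<inter> U2 = {}" using assms(2) by blast
  then have cu: "card (U1 \<union> U2) = card U1 + card U2" using assms by (simp add: card_Un_disjoint)
  show "L A (D \<union> U1) U2 (L A D U1 w) t = L A D (U1 \<union> U2) w t"
  proof (cases "dom t = D \<union> U1 \<union> U2 \<and> (\<forall>x\<in>U2. t x \<in> Some ` A)")
    case True
    then have d1: "dom (t |` (D \<union> U1)) = D \<union> U1" by auto
    have r: "(t |` (D \<union> U1)) |` D = t |` D" by auto
    have v: "(\<forall>x\<in>U1. (t |` (D \<union> U1)) x \<in> Some ` A) = (\<forall>x\<in>U1. t x \<in> Some ` A)" by auto
    show ?thesis using True d1 r v cu
      by (auto simp: L_def Un_assoc power_add field_simps)
  next
    case False
    then show ?thesis by (auto simp: L_def Un_assoc)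
  qed
qed




lemma sat_Alls:
  assumes "wteam A D w" "finite D" "finite A" "distinct u" "set u \<inter> D = {}"
  shows "sat A D w (Alls u p) = sat A (D \<union> set u) (L A D (set u) w) p"
  using assms
proof (induction u arbitrary: D w)
  case Nil
  then show ?case by (simp add: Alls_def L_empty)
next
  case (Cons x us)
  have xD: "x \<notin> D" using Cons.prems by auto
  have w1: "wteam A (D \<union> {x}) (L A D {x} w)" by (rule wteam_L[OF Cons.prems(1) Cons.prems(2) _ Cons.prems(3)]) simp
  have "sat A D w (Alls (x # us) p) = sat A (insert x D) (dup A D w x) (Alls us p)"
    by (simp add: Alls_def)
  also have "\<dots> = sat A (D \<union> {x}) (L A D {x} w) (Alls us p)"
    using dup_L[OF Cons.prems(1) xD] by simp
  also have "\<dots> = sat A (D \<union> {x} \<union> set us) (L A (D \<union> {x}) (set us) (L A D {x} w)) p"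
    by (rule Cons.IH) (use w1 Cons.prems in auto)
  also have "L A (D \<union> {x}) (set us) (L A D {x} w) = L A D ({x} \<union> set us) w"
    by (rule L_comp) (use Cons.prems in auto)
  finally show ?case by (simp add: Un_assoc)
qed

lemma marg_L1:
  assumes w: "wteam A D w" and xD: "x \<notin> D" and A: "finite A" "A \<noteq> {}"
  shows "marg (L A D {x} w) D r = w r"
proof (cases "w r = 0")
  case True
  have e: "{t. L A D {x} w t \<noteq> 0 \<and> t |` D = r} = {}" using True by (auto simp: L_def split: if_splits)
  show ?thesis unfolding marg_def tw_def e using True by simp
next
  case False
  have dr: "dom r = D" using wteam_dom[OF w False] .
  have rr: "(r(x \<mapsto> a)) |` D = r" for a
  proof -
    have "(r(x \<mapsto> a)) |` D = r |` D" using xD by (auto simp: restrict_map_def fun_eq_iff)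
    then show ?thesis using restrict_dom_id[of r D] dr by simp
  qed
  have cA: "card A > 0" using A by (simp add: card_gt_0_iff)
  have Lv: "L A D {x} w (r(x \<mapsto> a)) = w r / real (card A)" if "a \<in> A" for a
    using that rr dr by (auto simp: L_def)
  have e: "{t. L A D {x} w t \<noteq> 0 \<and> t |` D = r} = (\<lambda>a. r(x \<mapsto> a)) ` A"
  proof
    show "{t. L A D {x} w t \<noteq> 0 \<and> t |` D = r} \<subseteq> (\<lambda>a. r(x \<mapsto> a)) ` A"
    proof
      fix t assume "t \<in> {t. L A D {x} w t \<noteq> 0 \<and> t |` D = r}"
      then have t: "dom t = D \<union> {x}" "t x \<in> Some ` A" "t |` D = r" by (auto simp: L_def split: if_splits)
      then obtain a where a: "a \<in> A" "t x = Some a" by auto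
      have "t = r(x \<mapsto> a)"
      proof
        fix z show "t z = (r(x \<mapsto> a)) z"
        proof (cases "z = x")
          case False
          show ?thesis
          proof (cases "z \<in> D")
            case True
            have "r z = (t |` D) z" using t(3) by simp
            then show ?thesis using True False by simp
          next
            case zD: False
            then have "z \<notin> dom t" "z \<notin> dom r" using t(1) dr False by auto
            then show ?thesis using False by (simp add: domIff)
          qed
        qed (simp add: a)
      qed
      then show "t \<in> (\<lambda>a. r(x \<mapsto> a)) ` A" using a by blast
    qed
  next
    show "(\<lambda>a. r(x \<mapsto> a)) ` A \<subseteq> {t. L A D {x} w t \<noteq> 0 \<and> t |` D = r}"
      using Lv rr False cA by auto
  qed
  have inj: "inj_on (\<lambda>a. r(x \<mapsto> a)) A"
    by (rule inj_onI) (metis fun_upd_same option.inject)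
  have "marg (L A D {x} w) D r = (\<Sum>a\<in>A. L A D {x} w (r(x \<mapsto> a)))"
    unfolding marg_def tw_def e by (simp add: sum.reindex[OF inj])
  also have "\<dots> = (\<Sum>a\<in>A. w r / real (card A))" using Lv by simp
  also have "\<dots> = w r" using cA by simp
  finally show ?thesis .
qed

lemma marg_L:
  assumes w: "wteam A D w" and fD: "finite D" and A: "finite A" "A \<noteq> {}"
    and U: "finite U" "U \<inter> D = {}"
  shows "marg (L A D U w) D r = w r"
  using U
proof (induction U arbitrary: r rule: finite_induct)
  case empty
  then show ?case using L_empty[OF w] marg_self[OF w] by simp
next
  case (insert x F)
  have eq: "L A D (insert x F) w = L A (D \<union> F) {x} (L A D F w)"
    using L_comp[of F D "{x}" A w] insert by auto
  have wF: "wteam A (D \<union> F) (L A D F w)" by (rule wteam_L[OF w fD insert(1) A(1)])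
  have w2: "wteam A (D \<union> F \<union> {x}) (L A (D \<union> F) {x} (L A D F w))"
    by (rule wteam_L[OF wF]) (use fD insert A in auto)
  have "marg (L A D (insert x F) w) D r = marg (marg (L A (D \<union> F) {x} (L A D F w)) (D \<union> F)) D r"
    unfolding eq using marg_tower[OF w2, of D "D \<union> F" r] by simp
  also have "marg (L A (D \<union> F) {x} (L A D F w)) (D \<union> F) = L A D F w"
    by (rule ext, rule marg_L1[OF wF _ A]) (use insert in auto)
  also have "marg (L A D F w) D r = w r" using insert by auto
  finally show ?case .
qed

definition detx :: "'v set \<Rightarrow> (('v,'a) assign \<Rightarrow> ('v,'a) assign) \<Rightarrow> (('v,'a) assign \<Rightarrow> real) \<Rightarrow> ('v,'a) assign \<Rightarrow> real" where
  "detx D G w t = (if t = (t |` D) ++ G (t |` D) then w (t |` D) else 0)"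

lemma detx_pos: "detx D G w t \<noteq> 0 \<Longrightarrow> t = (t |` D) ++ G (t |` D) \<and> w (t |` D) \<noteq> 0"
  by (auto simp: detx_def split: if_splits)

lemma restrict_add_disj:
  assumes "dom r = D" "dom g \<inter> D = {}"
  shows "(r ++ g) |` D = r"
proof
  fix x show "((r ++ g) |` D) x = r x"
  proof (cases "x \<in> D")
    case True
    then have "g x = None" using assms(2) by auto
    then show ?thesis using True by (simp add: map_add_def)
  next
    case False then show ?thesis using assms(1) by (auto simp: restrict_map_def)
  qed
qed

locale DG =
  fixes A :: "'a set" and D V :: "'v set" and G :: "('v,'a) assign \<Rightarrow> ('v,'a) assign"
    and w :: "('v,'a) assign \<Rightarrow> real"
  assumes w: "wteam A D w" and VD: "V \<inter> D = {}"
    and G: "\<And>r. w r \<noteq> 0 \<Longrightarrow> dom (G r) = V \<and> ran (G r) \<subseteq> A"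
begin

lemma detx_at: "w r \<noteq> 0 \<Longrightarrow> detx D G w (r ++ G r) = w r"
  using restrict_add_disj[of r D "G r"] wteam_dom[OF w] G VD by (auto simp: detx_def)

lemma wteam_detx: "wteam A (D \<union> V) (detx D G w)"
proof -
  have dr: "dom t = D \<union> V \<and> ran t \<subseteq> A" if nz: "detx D G w t \<noteq> 0" for t
  proof -
    let ?r = "t |` D"
    have h: "t = ?r ++ G ?r" "w ?r \<noteq> 0" using detx_pos[OF nz] by auto
    have d: "dom ?r = D" "ran ?r \<subseteq> A" using wteam_dom[OF w h(2)] wteam_ran[OF w h(2)] by auto
    have g: "dom (G ?r) = V" "ran (G ?r) \<subseteq> A" using G[OF h(2)] by auto
    have "dom t = D \<union> V" using d g h(1) by (metis dom_map_add sup_commute)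
    moreover have "ran t \<subseteq> A"
    proof
      fix b assume "b \<in> ran t"
      then obtain x where x: "t x = Some b" by (auto simp: ran_def)
      then have "(?r ++ G ?r) x = Some b" using h(1) by simp
      then have "G ?r x = Some b \<or> ?r x = Some b" by (auto simp: map_add_def split: option.splits)
      then show "b \<in> A" using d g by (auto simp: ran_def)
    qed
    ultimately show ?thesis by simp
  qed
  have "{t. detx D G w t \<noteq> 0} \<subseteq> (\<lambda>r. r ++ G r) ` {r. w r \<noteq> 0}"
  proof
    fix t assume "t \<in> {t. detx D G w t \<noteq> 0}"
    then have h: "t = (t |` D) ++ G (t |` D)" "w (t |` D) \<noteq> 0" using detx_pos by auto
    then show "t \<in> (\<lambda>r. r ++ G r) ` {r. w r \<noteq> 0}" by blast
  qed
  then have "finite {t. detx D G w t \<noteq> 0}" using wteam_fin[OF w] by (auto intro: finite_subset)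
  moreover have "\<forall>t. 0 \<le> detx D G w t" using wteam_nonneg[OF w] by (simp add: detx_def)
  ultimately show ?thesis unfolding wteam_def using dr by blast
qed

lemma marg_detx: "marg (detx D G w) D r = w r"
proof (cases "w r = 0")
  case True
  have e: "{t. detx D G w t \<noteq> 0 \<and> t |` D = r} = {}" using True detx_pos by blast
  show ?thesis unfolding marg_def tw_def e using True by simp
next
  case False
  have rr: "(r ++ G r) |` D = r" using restrict_add_disj[of r D "G r"] wteam_dom[OF w False] G[OF False] VD by auto
  have e: "{t. detx D G w t \<noteq> 0 \<and> t |` D = r} = {r ++ G r}"
  proof
    show "{t. detx D G w t \<noteq> 0 \<and> t |` D = r} \<subseteq> {r ++ G r}" using detx_pos by fastforce
    show "{r ++ G r} \<subseteq> {t. detx D G w t \<noteq> 0 \<and> t |` D = r}" using detx_at[OF False] rr False by simp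
  qed
  show ?thesis unfolding marg_def tw_def e using detx_at[OF False] by simp
qed

end

lemma sat_Exs_intro:
  assumes "wteam A D w" "distinct z" "set z \<inter> D = {}" "wteam A (D \<union> set z) w'"
    "\<forall>r. marg w' D r = w r" "sat A (D \<union> set z) w' p"
  shows "sat A D w (Exs z p)"
  using assms
proof (induction z arbitrary: D w)
  case Nil
  have "w' = w" using marg_self[of A D w'] Nil by (auto simp: fun_eq_iff)
  then show ?case using Nil by (simp add: Exs_def)
next
  case (Cons x zs)
  have xD: "x \<notin> D" using Cons.prems by auto
  let ?w1 = "marg w' (insert x D)"
  have w1: "wteam A (insert x D) ?w1" by (rule wteam_marg[OF Cons.prems(4)]) auto
  have m: "marg ?w1 (D - {x}) t = marg w (D - {x}) t" for t
    using marg_tower[OF Cons.prems(4), of D "insert x D" t] xD Cons.prems(5) marg_self[OF Cons.prems(1)]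
    by auto
  have "sat A (insert x D) ?w1 (Exs zs p)"
    by (rule Cons.IH) (use w1 Cons.prems in auto)
  then show ?case using w1 m by (auto simp: Exs_def)
qed

lemma sat_Exs_elim:
  assumes "wteam A D w" "distinct z" "set z \<inter> D = {}" "sat A D w (Exs z p)"
  shows "\<exists>w'. wteam A (D \<union> set z) w' \<and> (\<forall>t. w' t > 0 \<longrightarrow> w (t |` D) > 0)
     \<and> (\<forall>r. w r > 0 \<longrightarrow> (\<exists>t. w' t > 0 \<and> t |` D = r)) \<and> sat A (D \<union> set z) w' p"
  using assms
proof (induction z arbitrary: D w)
  case Nil
  have "w (t |` D) = w t" if "w t > 0" for t
    using restrict_dom_id[of t D] wteam_dom[OF Nil.prems(1), of t] that by auto
  moreover have "r |` D = r" if "w r > 0" for r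
    using restrict_dom_id[of r D] wteam_dom[OF Nil.prems(1), of r] that by auto
  ultimately show ?case using Nil by (auto simp: Exs_def intro!: exI[of _ w])
next
  case (Cons x zs)
  have xD: "x \<notin> D" using Cons.prems by auto
  have D: "D - {x} = D" using xD by auto
  obtain w1 where w1: "wteam A (insert x D) w1" "\<forall>t. marg w1 D t = marg w D t"
    "sat A (insert x D) w1 (Exs zs p)"
    using Cons.prems(4) D by (auto simp: Exs_def)
  obtain w' where w': "wteam A (insert x D \<union> set zs) w'" "\<forall>t. w' t > 0 \<longrightarrow> w1 (t |` insert x D) > 0"
    "\<forall>r. w1 r > 0 \<longrightarrow> (\<exists>t. w' t > 0 \<and> t |` insert x D = r)" "sat A (insert x D \<union> set zs) w' p"
    using Cons.IH[OF w1(1) _ _ w1(3)] Cons.prems by auto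
  have down: "w (t |` D) > 0" if "w' t > 0" for t
  proof -
    have "w1 (t |` insert x D) > 0" using w' that by auto
    then have "marg w1 D ((t |` insert x D) |` D) > 0" using marg_pos[OF w1(1)] by blast
    moreover have "insert x D \<inter> D = D" by auto
    ultimately have "marg w D (t |` D) > 0" using w1(2) by simp
    then show ?thesis using marg_self[OF Cons.prems(1)] by simp
  qed
  have up: "\<exists>t. w' t > 0 \<and> t |` D = r" if "w r > 0" for r
  proof -
    have "marg w1 D r > 0" using w1(2) marg_self[OF Cons.prems(1)] that by simp
    then obtain t1 where t1: "w1 t1 > 0" "t1 |` D = r" using marg_pos[OF w1(1)] by blast
    then obtain t where "w' t > 0" "t |` insert x D = t1" using w' by blast
    moreover have "insert x D \<inter> D = D" by auto
    ultimately show ?thesis using t1 by (metis restrict_restrict)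
  qed
  show ?case using w' down up by (auto simp: Un_assoc intro!: exI[of _ w'])
qed




lemma holds_iff: "qf a \<Longrightarrow> qf b \<Longrightarrow> qf (iff a b) \<and> holds s (iff a b) = (holds s a = holds s b)"
  using qf_neg[of a s] qf_neg[of b s] by (auto simp: iff_def)

lemma holds_imp: "qf a \<Longrightarrow> qf p \<Longrightarrow> qf (imp a p) \<and> holds s (imp a p) = (holds s a \<longrightarrow> holds s p)"
  using qf_neg[of a s] by (auto simp: imp_def)

lemma qf_fo_neg: "qf p \<Longrightarrow> qf (fo_neg p)" using qf_neg by blast
lemma holds_neg: "qf p \<Longrightarrow> holds s (fo_neg p) = (\<not> holds s p)" using qf_neg by blast
lemma qf_iff: "qf a \<Longrightarrow> qf b \<Longrightarrow> qf (iff a b)" using holds_iff by blast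
lemma holds_iff2: "qf a \<Longrightarrow> qf b \<Longrightarrow> holds s (iff a b) = (holds s a = holds s b)" using holds_iff by blast
lemma qf_imp: "qf a \<Longrightarrow> qf b \<Longrightarrow> qf (imp a b)" using holds_imp by blast
lemma holds_imp2: "qf a \<Longrightarrow> qf b \<Longrightarrow> holds s (imp a b) = (holds s a \<longrightarrow> holds s b)" using holds_imp by blast

lemma L_pos_down: "wteam A D w \<Longrightarrow> L A D U w t > 0 \<Longrightarrow> w (t |` D) > 0"
  using wteam_nonneg[of A D w "t |` D"] by (auto simp: L_def zero_less_divide_iff split: if_splits)

lemma L_pos_up: "finite A \<Longrightarrow> A \<noteq> {} \<Longrightarrow> dom t = D \<union> U \<Longrightarrow> \<forall>x\<in>U. t x \<in> Some ` A \<Longrightarrow> w (t |` D) > 0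
   \<Longrightarrow> L A D U w t > 0"
  by (simp add: L_def card_gt_0_iff)

lemma ext_vals: "distinct u \<Longrightarrow> length vs = length u \<Longrightarrow> set vs \<subseteq> Some ` A \<Longrightarrow> \<exists>g. dom g = set u \<and> map g u = vs"
proof (induction u arbitrary: vs)
  case Nil then show ?case by (intro exI[of _ Map.empty]) auto
next
  case (Cons x us)
  then obtain v vs' where vs: "vs = v # vs'" by (cases vs) auto
  obtain g where g: "dom g = set us" "map g us = vs'" using Cons vs by auto
  have "v \<noteq> None" using Cons.prems vs by auto
  have "dom (g(x := v)) = set (x # us)" using g(1) \<open>v \<noteq> None\<close> by (auto simp: dom_fun_upd)
  moreover have "map (g(x := v)) (x # us) = vs" using g(2) vs Cons.prems(1) by simp
  ultimately show ?case by blast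
qed

lemma sat_Exs_elim':
  assumes "wteam A D w" "distinct z" "set z \<inter> D = {}" "sat A D w (Exs z p)"
  obtains w' where "wteam A (D \<union> set z) w'" "\<forall>t. w' t > 0 \<longrightarrow> w (t |` D) > 0"
     "\<forall>r. w r > 0 \<longrightarrow> (\<exists>t. w' t > 0 \<and> t |` D = r)" "sat A (D \<union> set z) w' p"
  using sat_Exs_elim[OF assms] by blast

lemma sat_Or_elim:
  assumes "sat A D w (Or p q)"
  obtains w1 w2 where "wteam A D w1" "wteam A D w2" "\<forall>s. w s = w1 s + w2 s" "sat A D w1 p" "sat A D w2 q"
  using assms by auto

lemma restr_sub: "W \<subseteq> V \<Longrightarrow> (t |` V) |` W = t |` W"
  by (auto simp: restrict_map_def fun_eq_iff)

lemma map_restr: "set xs \<subseteq> V \<Longrightarrow> map (t |` V) xs = map t xs"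
  by auto

locale setting =
  fixes A :: "'a set" and D :: "'v set" and w :: "('v, 'a) assign \<Rightarrow> real"
    and k m :: nat and x1 x2 u z0 z :: "'v list" and v1 v2 y :: 'v
  assumes k: "k > 0" and fA: "finite A" and nA: "A \<noteq> {}" and fD: "finite D" and w: "wteam A D w"
    and l1: "length x1 = m" and l2: "length x2 = m" and lu: "length u = m"
    and lz0: "length z0 = k" and lz: "length z = k"
    and xD: "set x1 \<union> set x2 \<subseteq> D"
    and dist: "distinct (u @ [v1, v2] @ z0 @ z)"
    and disj: "set (u @ [v1, v2] @ z0 @ z) \<inter> D = {}"
    and yu: "y \<in> set u"
begin

abbreviation "D0 \<equiv> D \<union> set u"
abbreviation "E \<equiv> D0 \<union> set [v1, v2]"
abbreviation "F \<equiv> E \<union> set z0"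
abbreviation "H \<equiv> F \<union> set z"
abbreviation "ys \<equiv> replicate k y"
abbreviation "Mx \<equiv> And (iff (eqs x1 u) (Eq v1 y)) (And (iff (eqs x2 u) (Eq v2 y))
   (And (imp (eqs z0 ys) (eqs z ys)) (Or (fo_neg (eqs z ys)) (MargId (u @ [v1]) (u @ [v2])))))"

lemma psi_eq: "psi x1 x2 u v1 v2 z0 z y = Alls u (Exs [v1, v2] (Alls z0 (Exs z Mx)))"
  using lz by (simp add: psi_def Exs_def Let_def)

lemma basics:
  shows "distinct u" "set u \<inter> D = {}" "distinct [v1, v2]" "set [v1, v2] \<inter> D0 = {}"
    "distinct z0" "set z0 \<inter> E = {}" "distinct z" "set z \<inter> F = {}"
    "finite D0" "finite E" "finite F" "card A > 0"
  using dist disj fD fA nA by (auto simp: card_gt_0_iff)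

lemma part2:
  assumes sp: "sat A D w (psi x1 x2 u v1 v2 z0 z y)"
  shows "sat A D w (And (Incl x1 x2) (Incl x2 x1))"
proof -
  note b = basics
  have W0: "wteam A D0 (L A D (set u) w)" by (rule wteam_L[OF w fD _ fA]) simp
  have s1: "sat A D w (Alls u (Exs [v1,v2] (Alls z0 (Exs z Mx))))" using sp unfolding psi_eq .
  have s2: "sat A D0 (L A D (set u) w) (Exs [v1,v2] (Alls z0 (Exs z Mx)))"
    using iffD1[OF sat_Alls[OF w fD fA b(1) b(2)] s1] .
  obtain W2 where W2: "wteam A E W2" "\<forall>t. W2 t > 0 \<longrightarrow> L A D (set u) w (t |` D0) > 0"
      "\<forall>r. L A D (set u) w r > 0 \<longrightarrow> (\<exists>t. W2 t > 0 \<and> t |` D0 = r)" "sat A E W2 (Alls z0 (Exs z Mx))"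
    by (rule sat_Exs_elim'[OF W0 b(3) b(4) s2])
  have W3: "wteam A F (L A E (set z0) W2)" by (rule wteam_L[OF W2(1) b(10) _ fA]) simp
  have s3: "sat A F (L A E (set z0) W2) (Exs z Mx)" using iffD1[OF sat_Alls[OF W2(1) b(10) fA b(5) b(6)] W2(4)] .
  obtain W4 where W4: "wteam A H W4" "\<forall>t. W4 t > 0 \<longrightarrow> L A E (set z0) W2 (t |` F) > 0"
      "\<forall>r. L A E (set z0) W2 r > 0 \<longrightarrow> (\<exists>t. W4 t > 0 \<and> t |` F = r)" "sat A H W4 Mx"
    by (rule sat_Exs_elim'[OF W3 b(7) b(8) s3])
  have qe: "qf (eqs a c)" for a c :: "'v list" by (rule qf_eqs)
  have M: "sat A H W4 (iff (eqs x1 u) (Eq v1 y))" "sat A H W4 (iff (eqs x2 u) (Eq v2 y))"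
    "sat A H W4 (imp (eqs z0 ys) (eqs z ys))"
    "sat A H W4 (Or (fo_neg (eqs z ys)) (MargId (u @ [v1]) (u @ [v2])))"
    using W4(4) unfolding sat.simps(3) by blast+
  have q1: "qf (iff (eqs x1 u) (Eq v1 y))" by (simp add: qf_iff qf_eqs)
  have q2: "qf (iff (eqs x2 u) (Eq v2 y))" by (simp add: qf_iff qf_eqs)
  have q3: "qf (imp (eqs z0 ys) (eqs z ys))" by (simp add: qf_imp qf_eqs)
  have h1: "\<forall>t. W4 t > 0 \<longrightarrow> holds t (iff (eqs x1 u) (Eq v1 y))" using flat[OF q1 W4(1)] M(1) by blast
  have h2: "\<forall>t. W4 t > 0 \<longrightarrow> holds t (iff (eqs x2 u) (Eq v2 y))" using flat[OF q2 W4(1)] M(2) by blast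
  have h3: "\<forall>t. W4 t > 0 \<longrightarrow> holds t (imp (eqs z0 ys) (eqs z ys))" using flat[OF q3 W4(1)] M(3) by blast
  have f1: "\<forall>t. W4 t > 0 \<longrightarrow> (map t x1 = map t u \<longleftrightarrow> t v1 = t y)"
    using h1 by (simp add: holds_iff2[OF qe, of "Eq v1 y"] holds_eqs[of x1 u] l1 lu)
  have f2: "\<forall>t. W4 t > 0 \<longrightarrow> (map t x2 = map t u \<longleftrightarrow> t v2 = t y)"
    using h2 by (simp add: holds_iff2[OF qe, of "Eq v2 y"] holds_eqs[of x2 u] l2 lu)
  have f3: "\<forall>t. W4 t > 0 \<longrightarrow> map t z0 = map t ys \<longrightarrow> map t z = map t ys"
    using h3 by (simp add: holds_imp2[OF qe qe] holds_eqs[of z0 ys] holds_eqs[of z ys] lz0 lz)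
  obtain Lf Y where LY: "wteam A H Lf" "wteam A H Y" "\<forall>t. W4 t = Lf t + Y t"
    "sat A H Lf (fo_neg (eqs z ys))" "sat A H Y (MargId (u @ [v1]) (u @ [v2]))" by (rule sat_Or_elim[OF M(4)])
  have q4: "qf (fo_neg (eqs z ys))" by (simp add: qf_fo_neg qf_eqs)
  have h4: "\<forall>t. Lf t > 0 \<longrightarrow> holds t (fo_neg (eqs z ys))" using flat[OF q4 LY(1)] LY(4) by blast
  have lf: "\<forall>t. Lf t > 0 \<longrightarrow> map t z \<noteq> map t ys"
    using h4 by (simp add: holds_neg[OF qe] holds_eqs[of z ys] lz)
  have mg: "\<forall>as. length as = Suc m \<and> set as \<subseteq> A \<longrightarrow>
      tw Y (\<lambda>t. map t (u @ [v1]) = map Some as) = tw Y (\<lambda>t. map t (u @ [v2]) = map Some as)"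
    using LY(5) lu by simp
  have incl: "sat A D w (Incl xa xb)"
    if c: "(xa = x1 \<and> va = v1 \<and> xb = x2 \<and> vb = v2) \<or> (xa = x2 \<and> va = v2 \<and> xb = x1 \<and> vb = v1)"
    for xa xb va vb
  proof -
    have ha: "\<forall>t. W4 t > 0 \<longrightarrow> (map t xa = map t u \<longleftrightarrow> t va = t y)" using c f1 f2 by auto
    have hb: "\<forall>t. W4 t > 0 \<longrightarrow> (map t xb = map t u \<longleftrightarrow> t vb = t y)" using c f1 f2 by auto
    have mg': "\<forall>as. length as = Suc m \<and> set as \<subseteq> A \<longrightarrow>
      tw Y (\<lambda>t. map t (u @ [va]) = map Some as) = tw Y (\<lambda>t. map t (u @ [vb]) = map Some as)"
      using c mg by auto
    have xa: "set xa \<subseteq> D" "length xa = m" "set xb \<subseteq> D" "va \<in> E" using c xD l1 l2 by auto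
    show ?thesis unfolding sat.simps
    proof (intro allI impI)
      fix s assume ws: "w s > 0"
      have ds: "dom s = D" "ran s \<subseteq> A" using wteam_dom[OF w] wteam_ran[OF w] ws by auto
      have sv: "s x \<in> Some ` A" if xin: "x \<in> D" for x
      proof -
        obtain b where "s x = Some b" using ds(1) xin by auto
        then show ?thesis using ds(2) by (auto simp: ran_def)
      qed
      have "set (map s xa) \<subseteq> Some ` A" using sv xa(1) by auto
      then obtain g where g: "dom g = set u" "map g u = map s xa"
        using ext_vals[OF b(1), of "map s xa" A] xa(2) lu by auto
      define d0 where "d0 = s ++ g"
      have d0D: "d0 |` D = s" unfolding d0_def by (rule restrict_add_disj) (use ds g b(2) in auto)
      have d0dom: "dom d0 = D0" using ds g by (auto simp: d0_def)
      have "map d0 u = map g u"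
      proof (rule map_cong[OF refl])
        fix x assume "x \<in> set u"
        then show "d0 x = g x" using g(1) by (simp add: d0_def map_add_dom_app_simps(1))
      qed
      then have d0u: "map d0 u = map s xa" using g(2) by simp
      have d0x: "d0 x = s x" if "x \<in> D" for x using d0D that by (metis restrict_in)
      have gA: "\<forall>x\<in>set u. d0 x \<in> Some ` A"
      proof
        fix x assume "x \<in> set u"
        then have "d0 x \<in> set (map d0 u)" by simp
        then show "d0 x \<in> Some ` A" using d0u \<open>set (map s xa) \<subseteq> Some ` A\<close> by auto
      qed
      have "L A D (set u) w d0 > 0" by (rule L_pos_up[OF fA nA d0dom gA]) (simp add: d0D ws)
      then obtain e where e: "W2 e > 0" "e |` D0 = d0" using W2(3) by blast
      have de: "dom e = E" "ran e \<subseteq> A" using wteam_dom[OF W2(1)] wteam_ran[OF W2(1)] e(1) by auto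
      have yE: "y \<in> E" using yu by auto
      obtain ay where ay: "e y = Some ay" "ay \<in> A"
      proof -
        obtain b where "e y = Some b" using de(1) yE by auto
        then show ?thesis using that de(2) by (auto simp: ran_def)
      qed
      define g2 where "g2 = (\<lambda>x. if x \<in> set z0 then e y else None)"
      define r where "r = e ++ g2"
      have dg2: "dom g2 = set z0" using ay by (auto simp: g2_def split: if_splits)
      have rE: "r |` E = e" unfolding r_def by (rule restrict_add_disj) (use de dg2 b(6) in auto)
      have rdom: "dom r = F" using de dg2 by (auto simp: r_def)
      have rz0: "r x = e y" if "x \<in> set z0" for x
        using that map_add_dom_app_simps(1)[of x g2 e] dg2 by (simp add: r_def g2_def)
      have "L A E (set z0) W2 r > 0"
        by (rule L_pos_up[OF fA nA rdom]) (use rz0 ay rE e in auto)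
      then obtain t where t: "W4 t > 0" "t |` F = r" using W4(3) by blast
      have tD0: "t x = d0 x" if xin: "x \<in> D0" for x
      proof -
        have xF: "x \<in> F" "x \<in> E" using xin by auto
        have "t x = r x" using t(2) xF(1) by (metis restrict_in)
        also have "\<dots> = e x" using rE xF(2) by (metis restrict_in)
        also have "\<dots> = d0 x" using e(2) xin by (metis restrict_in)
        finally show ?thesis .
      qed
      have "map t u = map d0 u" by (rule map_cong[OF refl]) (use tD0 in auto)
      then have tu: "map t u = map s xa" using d0u by simp
      have txa: "map t xa = map s xa"
      proof (rule map_cong[OF refl])
        fix x assume "x \<in> set xa"
        then have "x \<in> D" using xa(1) by auto
        then show "t x = s x" using tD0 d0x by auto
      qed
      have "map t xa = map t u" using tu txa by simp
      then have tva: "t va = t y" using ha t(1) by blast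
      have yD0: "y \<in> D0" using yu by auto
      have ty: "t y = e y" using tD0[OF yD0] e(2) yD0 by (metis restrict_in)
      have "set z0 \<subseteq> F" by auto
      then have "map t z0 = map r z0" using t(2) map_restr[of z0 F t] by simp
      also have "\<dots> = map (\<lambda>_. e y) z0" by (rule map_cong[OF refl]) (use rz0 in auto)
      also have "\<dots> = replicate k (e y)" using lz0 by (simp add: map_replicate_const)
      finally have "map t z0 = map t ys" using ty by simp
      then have tz: "map t z = map t ys" using f3 t(1) by blast
      have "\<not> Lf t > 0" using lf tz by blast
      moreover have "W4 t = Lf t + Y t" using LY(3) by blast
      ultimately have Yt: "Y t > 0" using t(1) wteam_nonneg[OF LY(1), of t] by linarith
      have dt: "dom t = H" "ran t \<subseteq> A" using wteam_dom[OF W4(1)] wteam_ran[OF W4(1)] t(1) by auto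
      have tv: "t x \<in> Some ` A" if xin: "x \<in> H" for x
      proof -
        obtain b where "t x = Some b" using dt(1) xin by auto
        then show ?thesis using dt(2) by (auto simp: ran_def)
      qed
      define as where "as = map (the \<circ> t) (u @ [va])"
      have asm: "map Some as = map t (u @ [va])"
      proof -
        have "Some (the (t x)) = t x" if "x \<in> set (u @ [va])" for x
          using tv[of x] that xa(4) by auto
        then show ?thesis by (simp add: as_def)
      qed
      have asA: "length as = Suc m \<and> set as \<subseteq> A"
      proof -
        have "the (t x) \<in> A" if "x \<in> set (u @ [va])" for x using tv[of x] that xa(4) by auto
        then show ?thesis using lu by (auto simp: as_def)
      qed
      have "tw Y (\<lambda>t'. map t' (u @ [va]) = map Some as) > 0"
        using tw_pos[OF LY(2), of "\<lambda>t'. map t' (u @ [va]) = map Some as"] Yt asm by auto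
      then have "tw Y (\<lambda>t'. map t' (u @ [vb]) = map Some as) > 0" using mg' asA by simp
      then obtain t' where t': "Y t' > 0" "map t' (u @ [vb]) = map t (u @ [va])"
        using tw_pos[OF LY(2), of "\<lambda>t'. map t' (u @ [vb]) = map Some as"] asm by auto
      have "W4 t' = Lf t' + Y t'" using LY(3) by blast
      then have W4t': "W4 t' > 0" using t'(1) wteam_nonneg[OF LY(1), of t'] by linarith
      have t'u: "map t' u = map t u" "t' vb = t va" using t'(2) by auto
      have "t' y = t y" using t'u(1) yu by (simp add: map_eq_conv)
      then have "t' vb = t' y" using t'u(2) tva by simp
      then have "map t' xb = map t' u" using hb W4t' by blast
      then have t'xb: "map t' xb = map t u" using t'u(1) by simp
      have "L A E (set z0) W2 (t' |` F) > 0" using W4(2) W4t' by blast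
      then have "W2 ((t' |` F) |` E) > 0" using L_pos_down[OF W2(1)] by blast
      moreover have "(t' |` F) |` E = t' |` E" by (rule restr_sub) auto
      ultimately have "W2 (t' |` E) > 0" by metis
      then have "L A D (set u) w ((t' |` E) |` D0) > 0" using W2(2) by blast
      moreover have "(t' |` E) |` D0 = t' |` D0" by (rule restr_sub) auto
      ultimately have "L A D (set u) w (t' |` D0) > 0" by metis
      then have "w ((t' |` D0) |` D) > 0" using L_pos_down[OF w] by blast
      moreover have "(t' |` D0) |` D = t' |` D" by (rule restr_sub) auto
      ultimately have ws': "w (t' |` D) > 0" by metis
      have "map (t' |` D) xb = map s xa" using t'xb tu map_restr[OF xa(3), of t'] by simp
      then show "\<exists>s'. w s' > 0 \<and> map s xa = map s' xb" using ws' by metis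
    qed
  qed
  show ?thesis using incl[of x1 v1 x2 v2] incl[of x2 v2 x1 v1] by simp
qed

end



lemma tw_ge_member: "wteam A D w \<Longrightarrow> P s \<Longrightarrow> w s \<le> tw w P"
proof -
  assume w: "wteam A D w" and P: "P s"
  show ?thesis
  proof (cases "w s = 0")
    case True then show ?thesis using tw_nonneg[OF w] by simp
  next
    case False
    have fin: "finite {s. w s \<noteq> 0 \<and> P s}" using wteam_fin[OF w] by (auto intro: finite_subset)
    show ?thesis unfolding tw_def
      by (rule member_le_sum) (use False P fin wteam_nonneg[OF w] in auto)
  qed
qed

lemma tw_mono: "wteam A D w \<Longrightarrow> (\<And>s. P s \<Longrightarrow> Q s) \<Longrightarrow> tw w P \<le> tw w Q"
proof -
  assume w: "wteam A D w" and PQ: "\<And>s. P s \<Longrightarrow> Q s"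
  have fin: "finite {s. w s \<noteq> 0 \<and> Q s}" using wteam_fin[OF w] by (auto intro: finite_subset)
  show ?thesis unfolding tw_def
    by (rule sum_mono2[OF fin]) (use PQ wteam_nonneg[OF w] in auto)
qed

lemma sum_split_if:
  fixes f :: "'b \<Rightarrow> real"
  assumes "finite S" "\<forall>e\<in>S. h e = (if c e then \<xi> else \<zeta>)"
  shows "(\<Sum>e\<in>S. if h e = \<beta> then f e else 0) =
    of_bool (\<xi> = \<beta>) * (\<Sum>e\<in>S. if c e then f e else 0)
    + of_bool (\<zeta> = \<beta>) * ((\<Sum>e\<in>S. f e) - (\<Sum>e\<in>S. if c e then f e else 0))"
proof -
  have "(\<Sum>e\<in>S. if h e = \<beta> then f e else 0) =
     (\<Sum>e\<in>S. of_bool (\<xi> = \<beta>) * (if c e then f e else 0) + of_bool (\<zeta> = \<beta>) * (f e - (if c e then f e else 0)))"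
    by (rule sum.cong[OF refl]) (use assms(2) in auto)
  also have "\<dots> = of_bool (\<xi> = \<beta>) * (\<Sum>e\<in>S. if c e then f e else 0)
    + of_bool (\<zeta> = \<beta>) * ((\<Sum>e\<in>S. f e) - (\<Sum>e\<in>S. if c e then f e else 0))"
    by (simp add: sum.distrib sum_distrib_left sum_subtractf)
  finally show ?thesis .
qed

lemma marg_scale:
  assumes w: "wteam A H w"
  shows "marg (\<lambda>t. w t * c (t |` V)) V r = c r * marg w V r"
proof -
  let ?S = "{s. w s \<noteq> 0}"
  have fin: "finite ?S" using wteam_fin[OF w] .
  have "marg (\<lambda>t. w t * c (t |` V)) V r = (\<Sum>s\<in>{s\<in>?S. s |` V = r}. w s * c (s |` V))"
    unfolding marg_def by (rule tw_superset[OF fin]) auto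
  also have "\<dots> = (\<Sum>s\<in>{s\<in>?S. s |` V = r}. c r * w s)" by (rule sum.cong) auto
  also have "\<dots> = c r * marg w V r"
    unfolding marg_def tw_superset[OF fin subset_refl] by (simp add: sum_distrib_left)
  finally show ?thesis .
qed

lemma marg_superset:
  assumes "finite S" "{s. f s \<noteq> 0} \<subseteq> S"
  shows "marg f V r = (\<Sum>s\<in>{s\<in>S. s |` V = r}. f s)"
  unfolding marg_def by (rule tw_superset[OF assms])

context setting
begin

definition cv :: "'a option \<Rightarrow> 'a" where "cv ov = (SOME b. b \<in> A \<and> Some b \<noteq> ov)"

definition G12 :: "('v,'a) assign \<Rightarrow> ('v,'a) assign" where
  "G12 r = (\<lambda>x. if x = v1 then (if map r x1 = map r u then r y else Some (cv (r y)))
     else if x = v2 then (if map r x2 = map r u then r y else Some (cv (r y))) else None)"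

definition "W0 = L A D (set u) w"
definition "W2 = detx D0 G12 W0"
definition "W3 = L A E (set z0) W2"
definition bz :: "('v,'a) assign \<Rightarrow> 'a option" where
  "bz r = (if map r z0 = replicate k (r y) then r y else Some (cv (r y)))"
definition Gz :: "('v,'a) assign \<Rightarrow> ('v,'a) assign" where
  "Gz r = (\<lambda>x. if x \<in> set z then bz r else None)"
definition "W4 = detx F Gz W3"
definition "nk = real (card A) ^ k"
definition Pf where "Pf a = tw W2 (\<lambda>e. map e u = a \<and> map e x1 = a)"
definition Qf where "Qf a = tw W2 (\<lambda>e. map e u = a \<and> map e x2 = a)"
definition Tf where "Tf a = min (Pf a) (Qf a)"
definition th where "th e = (if map e x1 = map e u then (if Pf (map e u) = 0 then 1 else Tf (map e u) / Pf (map e u))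
   else if map e x2 = map e u then (if Qf (map e u) = 0 then 1 else Tf (map e u) / Qf (map e u)) else 1)"
definition gm where "gm e = (th e - 1 / nk) / (1 - 1 / nk)"
definition rho where "rho r = (if map r z0 = replicate k (r y) then 1 else gm (r |` E))"
definition Yt where "Yt t = W4 t * rho (t |` F)"
definition Lt where "Lt t = W4 t * (1 - rho (t |` F))"

end

locale setting2 = setting +
  assumes n2: "2 \<le> card A"
    and inc1: "sat A D w (Incl x1 x2)" and inc2: "sat A D w (Incl x2 x1)"
    and tz: "tw w (\<lambda>s. map s x1 = map s x2) = 0"
    and mw: "\<forall>s. w s > 0 \<longrightarrow> w s \<ge> size_wt w / real (card A) ^ k"
begin

lemma cv_prop: "cv ov \<in> A \<and> Some (cv ov) \<noteq> ov"
proof -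
  have "\<exists>b. b \<in> A \<and> Some b \<noteq> ov"
  proof -
    obtain a where a: "a \<in> A" using nA by auto
    have "\<not> A \<subseteq> {a}"
    proof
      assume "A \<subseteq> {a}"
      then have "card A \<le> card {a}" by (rule card_mono[rotated]) simp
      then show False using n2 by simp
    qed
    then obtain b where b: "b \<in> A" "b \<noteq> a" by auto
    show ?thesis
    proof (cases "ov = Some a")
      case True then show ?thesis using b by auto
    next
      case False then show ?thesis using a by auto
    qed
  qed
  then show ?thesis unfolding cv_def by (rule someI_ex)
qed

lemma nk_ge: "nk \<ge> 2"
proof -
  have "real (card A) \<ge> 2" using n2 by simp
  then have "real (card A) ^ k \<ge> 2 ^ k" by (rule power_mono) simp
  moreover have "(2::real) ^ k \<ge> 2" using k by (metis One_nat_def Suc_leI power_increasing power_one_right one_le_numeral)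
  ultimately show ?thesis unfolding nk_def by linarith
qed

lemma q_props: "0 < 1 / nk" "1 / nk < 1" "1 - 1 / nk > 0"
  using nk_ge by auto

lemmas b = basics

lemma cardA: "real (card A) > 0" using fA nA by (simp add: card_gt_0_iff)

lemma W0_team: "wteam A D0 W0"
  unfolding W0_def by (rule wteam_L[OF w fD _ fA]) simp

lemma W0_supp:
  assumes "W0 d > 0"
  shows "dom d = D0" "ran d \<subseteq> A" "w (d |` D) > 0" "W0 d = w (d |` D) / real (card A) ^ m"
proof -
  show "dom d = D0" "ran d \<subseteq> A" using wteam_dom[OF W0_team] wteam_ran[OF W0_team] assms by auto
  show "w (d |` D) > 0" using L_pos_down[OF w] assms unfolding W0_def by blast
  have "card (set u) = m" using b(1) lu distinct_card by metis
  then show "W0 d = w (d |` D) / real (card A) ^ m" using assms unfolding W0_def L_def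
    by (auto split: if_splits)
qed

lemma someA: "dom d = V \<Longrightarrow> ran d \<subseteq> A \<Longrightarrow> x \<in> V \<Longrightarrow> d x \<in> Some ` A"
proof -
  assume "dom d = V" "ran d \<subseteq> A" "x \<in> V"
  then obtain b where "d x = Some b" by auto
  then show "d x \<in> Some ` A" using \<open>ran d \<subseteq> A\<close> by (auto simp: ran_def)
qed

lemma dg1: "DG A D0 (set [v1, v2]) G12 W0"
proof
  show "wteam A D0 W0" by (rule W0_team)
  show "set [v1, v2] \<inter> D0 = {}" using b(4) .
  fix r assume "W0 r \<noteq> 0"
  then have r: "W0 r > 0" using wteam_pos[OF W0_team] by blast
  have ry: "r y \<in> Some ` A" using someA[OF W0_supp(1)[OF r] W0_supp(2)[OF r]] yu by auto
  have v12: "v1 \<noteq> v2" using dist by auto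
  have "dom (G12 r) = set [v1, v2]" using ry v12 by (auto simp: G12_def split: if_splits)
  moreover have "ran (G12 r) \<subseteq> A" using ry cv_prop v12 by (auto simp: G12_def ran_def)
  ultimately show "dom (G12 r) = set [v1, v2] \<and> ran (G12 r) \<subseteq> A" by simp
qed

lemma W2_team: "wteam A E W2" unfolding W2_def by (rule DG.wteam_detx[OF dg1])
lemma W2_marg: "marg W2 D0 r = W0 r" unfolding W2_def by (rule DG.marg_detx[OF dg1])

lemma W2_supp:
  assumes e: "W2 e > 0"
  shows "W0 (e |` D0) > 0" "e = (e |` D0) ++ G12 (e |` D0)" "W2 e = W0 (e |` D0)"
    "dom e = E" "ran e \<subseteq> A"
proof -
  have h: "e = (e |` D0) ++ G12 (e |` D0) \<and> W0 (e |` D0) \<noteq> 0" using detx_pos[of D0 G12 W0 e] e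
    unfolding W2_def by auto
  then show "e = (e |` D0) ++ G12 (e |` D0)" by blast
  show "W2 e = W0 (e |` D0)" using h unfolding W2_def detx_def by auto
  then show "W0 (e |` D0) > 0" using e by simp
  show "dom e = E" "ran e \<subseteq> A" using wteam_dom[OF W2_team] wteam_ran[OF W2_team] e by auto
qed

lemma W2_vals:
  assumes e: "W2 e > 0"
  shows "e v1 = (if map e x1 = map e u then e y else Some (cv (e y)))"
    "e v2 = (if map e x2 = map e u then e y else Some (cv (e y)))"
    "w (e |` D) > 0" "W2 e = w (e |` D) / real (card A) ^ m"
    "e y \<in> Some ` A"
proof -
  let ?d = "e |` D0"
  have d: "W0 ?d > 0" "e = ?d ++ G12 ?d" using W2_supp[OF e] by auto
  have dd: "dom ?d = D0" "ran ?d \<subseteq> A" using W0_supp[OF d(1)] by auto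
  have yD0: "y \<in> D0" using yu by auto
  have dy: "?d y \<in> Some ` A" by (rule someA[OF dd yD0])
  have x1m: "map ?d x1 = map e x1" "map ?d x2 = map e x2" "map ?d u = map e u" "?d y = e y"
    using xD yu by (auto simp: map_restr)
  have v12: "v1 \<noteq> v2" using dist by auto
  have g1: "G12 ?d v1 \<noteq> None" "G12 ?d v2 \<noteq> None" using dy v12 by (auto simp: G12_def)
  have "e v1 = G12 ?d v1" using d(2) g1(1) by (metis domIff map_add_dom_app_simps(1))
  then show "e v1 = (if map e x1 = map e u then e y else Some (cv (e y)))"
    using x1m by (simp add: G12_def)
  have "e v2 = G12 ?d v2" using d(2) g1(2) by (metis domIff map_add_dom_app_simps(1))
  then show "e v2 = (if map e x2 = map e u then e y else Some (cv (e y)))"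
    using x1m v12 by (simp add: G12_def)
  have r: "?d |` D = e |` D" by (rule restr_sub) auto
  show "w (e |` D) > 0" using W0_supp(3)[OF d(1)] r by simp
  show "W2 e = w (e |` D) / real (card A) ^ m" using W0_supp(4)[OF d(1)] r W2_supp(3)[OF e] by simp
  show "e y \<in> Some ` A" using dy x1m by simp
qed

lemma W3_team: "wteam A F W3" unfolding W3_def by (rule wteam_L[OF W2_team b(10) _ fA]) simp
lemma W3_marg: "marg W3 E r = W2 r" unfolding W3_def by (rule marg_L[OF W2_team b(10) fA nA]) (use b(6) in auto)

lemma W3_supp:
  assumes r: "W3 r > 0"
  shows "dom r = F" "ran r \<subseteq> A" "W2 (r |` E) > 0" "W3 r = W2 (r |` E) / nk" "r y \<in> Some ` A"
proof -
  show d: "dom r = F" and rA: "ran r \<subseteq> A" using wteam_dom[OF W3_team] wteam_ran[OF W3_team] r by auto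
  show "W2 (r |` E) > 0" using L_pos_down[OF W2_team] r unfolding W3_def by blast
  have "card (set z0) = k" using b(5) lz0 distinct_card by metis
  then show "W3 r = W2 (r |` E) / nk" using r unfolding W3_def L_def nk_def by (auto split: if_splits)
  show "r y \<in> Some ` A" by (rule someA[OF d rA]) (use yu in auto)
qed

lemma bz_A: "W3 r > 0 \<Longrightarrow> bz r \<in> Some ` A"
  using W3_supp(5)[of r] cv_prop by (auto simp: bz_def)

lemma dg2: "DG A F (set z) Gz W3"
proof
  show "wteam A F W3" by (rule W3_team)
  show "set z \<inter> F = {}" using b(8) .
  fix r assume "W3 r \<noteq> 0"
  then have r: "W3 r > 0" using wteam_pos[OF W3_team] by blast
  have "bz r \<in> Some ` A" by (rule bz_A[OF r])
  then show "dom (Gz r) = set z \<and> ran (Gz r) \<subseteq> A" by (auto simp: Gz_def ran_def split: if_splits)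
qed

lemma W4_team: "wteam A H W4" unfolding W4_def by (rule DG.wteam_detx[OF dg2])
lemma W4_marg: "marg W4 F r = W3 r" unfolding W4_def by (rule DG.marg_detx[OF dg2])

lemma W4_supp:
  assumes t: "W4 t > 0"
  shows "W3 (t |` F) > 0" "\<forall>x\<in>set z. t x = bz (t |` F)" "W4 t = W3 (t |` F)"
proof -
  let ?r = "t |` F"
  have h: "t = ?r ++ Gz ?r \<and> W3 ?r \<noteq> 0" using detx_pos[of F Gz W3 t] t unfolding W4_def by auto
  show "W4 t = W3 (t |` F)" using h unfolding W4_def detx_def by auto
  then show r: "W3 ?r > 0" using t by simp
  have "bz ?r \<noteq> None" using bz_A[OF r] by auto
  then show "\<forall>x\<in>set z. t x = bz ?r" using h
    by (metis Gz_def domIff map_add_dom_app_simps(1))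
qed

lemma W4_E: "W4 t > 0 \<Longrightarrow> W2 (t |` E) > 0"
proof -
  assume t: "W4 t > 0"
  have "W2 ((t |` F) |` E) > 0" using W3_supp(3)[OF W4_supp(1)[OF t]] .
  moreover have "(t |` F) |` E = t |` E" by (rule restr_sub) auto
  ultimately show ?thesis by metis
qed

lemma W4_iff:
  assumes t: "W4 t > 0"
  shows "(map t x1 = map t u) = (t v1 = t y)" "(map t x2 = map t u) = (t v2 = t y)"
proof -
  let ?e = "t |` E"
  have e: "W2 ?e > 0" by (rule W4_E[OF t])
  have m: "map ?e x1 = map t x1" "map ?e x2 = map t x2" "map ?e u = map t u" "?e y = t y"
    "?e v1 = t v1" "?e v2 = t v2"
    using xD yu by (auto simp: map_restr)
  have c: "Some (cv (t y)) \<noteq> t y" using cv_prop by blast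
  have ev1: "t v1 = (if map t x1 = map t u then t y else Some (cv (t y)))"
    using W2_vals(1)[OF e] unfolding m .
  have ev2: "t v2 = (if map t x2 = map t u then t y else Some (cv (t y)))"
    using W2_vals(2)[OF e] unfolding m .
  show "(map t x1 = map t u) = (t v1 = t y)" using ev1 c by (cases "map t x1 = map t u") auto
  show "(map t x2 = map t u) = (t v2 = t y)" using ev2 c by (cases "map t x2 = map t u") auto
qed

lemma W4_z:
  assumes t: "W4 t > 0"
  shows "map t z = replicate k (bz (t |` F))" "map t ys = replicate k ((t |` F) y)"
    "map t z0 = map (t |` F) z0"
proof -
  have "map t z = map (\<lambda>_. bz (t |` F)) z" by (rule map_cong[OF refl]) (use W4_supp(2)[OF t] in auto)
  then show "map t z = replicate k (bz (t |` F))" using lz by (simp add: map_replicate_const)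
  have "y \<in> F" using yu by auto
  then show "map t ys = replicate k ((t |` F) y)" by simp
  show "map t z0 = map (t |` F) z0" by (simp add: map_restr)
qed

lemma W4_imp: "W4 t > 0 \<Longrightarrow> map t z0 = map t ys \<Longrightarrow> map t z = map t ys"
  using W4_z[of t] by (simp add: bz_def)

lemma W4_neg: "W4 t > 0 \<Longrightarrow> map (t |` F) z0 \<noteq> replicate k ((t |` F) y) \<Longrightarrow> map t z \<noteq> map t ys"
  using W4_z[of t] cv_prop k by (simp add: bz_def)

lemma W2_x12: "W2 e > 0 \<Longrightarrow> map e x1 \<noteq> map e x2"
proof
  assume e: "W2 e > 0" and eq: "map e x1 = map e x2"
  have "map (e |` D) x1 = map (e |` D) x2" using eq xD by (simp add: map_restr)
  then have "tw w (\<lambda>s. map s x1 = map s x2) > 0" using tw_pos[OF w] W2_vals(3)[OF e] by blast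
  then show False using tz by simp
qed

lemma lift:
  assumes s: "w s > 0" and a: "length a = m" "set a \<subseteq> Some ` A"
  shows "\<exists>e. W2 e > 0 \<and> e |` D = s \<and> map e u = a"
proof -
  have ds: "dom s = D" using wteam_dom[OF w] s by auto
  obtain g where g: "dom g = set u" "map g u = a" using ext_vals[OF b(1), of a A] a lu by auto
  define d where "d = s ++ g"
  have dD: "d |` D = s" unfolding d_def by (rule restrict_add_disj) (use ds g b(2) in auto)
  have ddom: "dom d = D0" using ds g by (auto simp: d_def)
  have "map d u = map g u"
  proof (rule map_cong[OF refl])
    fix x assume "x \<in> set u"
    then show "d x = g x" using g(1) by (simp add: d_def map_add_dom_app_simps(1))
  qed
  then have du: "map d u = a" using g(2) by simp
  have gA: "\<forall>x\<in>set u. d x \<in> Some ` A"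
  proof
    fix x assume "x \<in> set u"
    then have "d x \<in> set (map d u)" by simp
    then show "d x \<in> Some ` A" using du a(2) by auto
  qed
  have d0: "W0 d > 0" unfolding W0_def by (rule L_pos_up[OF fA nA ddom gA]) (simp add: dD s)
  define e where "e = d ++ G12 d"
  have We: "W2 e = W0 d" unfolding W2_def e_def by (rule DG.detx_at[OF dg1]) (use d0 in simp)
  have gd: "dom (G12 d) = set [v1, v2]" using DG.G[OF dg1, of d] d0 by simp
  have eD0: "e |` D0 = d" unfolding e_def by (rule restrict_add_disj) (use ddom gd b(4) in auto)
  have "e |` D = (e |` D0) |` D" by (rule restr_sub[symmetric]) auto
  then have es: "e |` D = s" using eD0 dD by simp
  have eu: "map e u = a" using eD0 du map_restr[of u D0 e] by simp
  have "W2 e > 0" using We d0 by simp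
  then show ?thesis using es eu by blast
qed

lemma B1: "tw W2 (\<lambda>e. map e u = a \<and> P e) \<le> size_wt w / real (card A) ^ m"
proof -
  have c1: "tw W2 (\<lambda>e. map e u = a \<and> P e) \<le> tw W2 (\<lambda>e. map e u = a)" by (rule tw_mono[OF W2_team]) simp
  have c2: "(\<lambda>e. map e u = a) = (\<lambda>e. map (e |` D0) u = a)" by (auto simp: map_restr)
  have c3: "tw W2 (\<lambda>e. map (e |` D0) u = a) = tw (marg W2 D0) (\<lambda>d. map d u = a)"
    using tw_tower[OF W2_team, of "\<lambda>d. map d u = a" D0] by simp
  have c4: "marg W2 D0 = W0" using W2_marg by auto
  have c5: "tw W2 (\<lambda>e. map e u = a) = tw W0 (\<lambda>d. map d u = a)" using c2 c3 c4 by simp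
  have "tw W0 (\<lambda>d. map d u = a) \<le> size_wt w / real (card A) ^ m"
  proof -
    let ?S = "{d. W0 d \<noteq> 0 \<and> map d u = a}"
    let ?g = "\<lambda>d. d |` D"
    have pos: "W0 d > 0" if "d \<in> ?S" for d using that wteam_pos[OF W0_team] by auto
    have finS: "finite ?S" using wteam_fin[OF W0_team] by (auto intro: finite_subset)
    have inj: "inj_on ?g ?S"
    proof (rule inj_onI)
      fix d d' assume d: "d \<in> ?S" and d': "d' \<in> ?S" and eq: "d |` D = d' |` D"
      have dd: "dom d = D0" "dom d' = D0" using W0_supp(1) pos d d' by auto
      have mu: "map d u = map d' u" using d d' by simp
      show "d = d'"
      proof
        fix x show "d x = d' x"
        proof (cases "x \<in> D")
          case True then show ?thesis using eq by (metis restrict_in)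
        next
          case False
          show ?thesis
          proof (cases "x \<in> set u")
            case True then show ?thesis using mu by (simp add: map_eq_conv)
          next
            case False
            then have "x \<notin> dom d" "x \<notin> dom d'" using dd \<open>x \<notin> D\<close> by auto
            then show ?thesis by (simp add: domIff)
          qed
        qed
      qed
    qed
    have "tw W0 (\<lambda>d. map d u = a) = (\<Sum>d\<in>?S. w (d |` D) / real (card A) ^ m)"
      unfolding tw_def by (rule sum.cong[OF refl]) (use W0_supp(4) pos in auto)
    also have "\<dots> = (\<Sum>d\<in>?S. w (d |` D)) / real (card A) ^ m" by (simp add: sum_divide_distrib)
    finally have e1: "tw W0 (\<lambda>d. map d u = a) = (\<Sum>d\<in>?S. w (d |` D)) / real (card A) ^ m" .
    have sub: "?g ` ?S \<subseteq> {s. w s \<noteq> 0}"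
    proof
      fix s assume "s \<in> ?g ` ?S"
      then obtain d where d: "d \<in> ?S" "s = d |` D" by auto
      then show "s \<in> {s. w s \<noteq> 0}" using W0_supp(3)[OF pos[OF d(1)]] by auto
    qed
    have "(\<Sum>d\<in>?S. w (d |` D)) = (\<Sum>s\<in>?g ` ?S. w s)" by (simp add: sum.reindex[OF inj])
    also have "\<dots> \<le> (\<Sum>s\<in>{s. w s \<noteq> 0}. w s)"
      by (rule sum_mono2[OF wteam_fin[OF w] sub]) (use wteam_nonneg[OF w] in auto)
    also have "\<dots> = size_wt w" by (simp add: size_wt_def tw_def)
    finally have e2: "(\<Sum>d\<in>?S. w (d |` D)) \<le> size_wt w" .
    have "(\<Sum>d\<in>?S. w (d |` D)) / real (card A) ^ m \<le> size_wt w / real (card A) ^ m"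
      by (rule divide_right_mono[OF e2]) (use cardA in simp)
    then show ?thesis using e1 by simp
  qed
  then show ?thesis using c1 c5 by linarith
qed

lemma B2: "W2 e > 0 \<Longrightarrow> W2 e \<ge> size_wt w / real (card A) ^ m / nk"
proof -
  assume e: "W2 e > 0"
  have "w (e |` D) \<ge> size_wt w / nk" using mw W2_vals(3)[OF e] unfolding nk_def by auto
  then have "w (e |` D) / real (card A) ^ m \<ge> size_wt w / nk / real (card A) ^ m"
    by (rule divide_right_mono) (use cardA in simp)
  moreover have "size_wt w / real (card A) ^ m / nk = size_wt w / nk / real (card A) ^ m"
    by (simp add: divide_divide_eq_left mult.commute)
  ultimately show ?thesis using W2_vals(4)[OF e] by (simp add: mult.commute)
qed

lemma B3:
  assumes c: "(xa = x1 \<and> xb = x2) \<or> (xa = x2 \<and> xb = x1)"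
    and pos: "tw W2 (\<lambda>e. map e u = a \<and> map e xa = a) > 0"
  shows "tw W2 (\<lambda>e. map e u = a \<and> map e xb = a) > 0"
    "tw W2 (\<lambda>e. map e u = a \<and> map e xa = a) / nk \<le> tw W2 (\<lambda>e. map e u = a \<and> map e xb = a)"
proof -
  obtain e where e: "W2 e > 0" "map e u = a" "map e xa = a" using pos tw_pos[OF W2_team] by auto
  have xs: "set xa \<subseteq> D" "set xb \<subseteq> D" using c xD by auto
  have inc: "sat A D w (Incl xa xb)" using c inc1 inc2 by auto
  have ws: "w (e |` D) > 0" by (rule W2_vals(3)[OF e(1)])
  then obtain s' where s': "w s' > 0" "map (e |` D) xa = map s' xb" using inc by auto
  have sa: "map (e |` D) xa = a" using e(3) xs(1) by (simp add: map_restr)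
  have "set a \<subseteq> Some ` A"
  proof
    fix o' assume "o' \<in> set a"
    then obtain x where x: "x \<in> set u" "o' = e x" using e(2) by auto
    show "o' \<in> Some ` A" using someA[OF W2_supp(4)[OF e(1)] W2_supp(5)[OF e(1)]] x by auto
  qed
  moreover have "length a = m" using e(2) lu by auto
  ultimately obtain e' where e': "W2 e' > 0" "e' |` D = s'" "map e' u = a" using lift[OF s'(1)] by blast
  have "map e' xb = map s' xb" using e'(2) xs(2) map_restr[of xb D e'] by simp
  then have exb: "map e' xb = a" using s'(2) sa by simp
  have ge: "W2 e' \<le> tw W2 (\<lambda>e. map e u = a \<and> map e xb = a)"
    by (rule tw_ge_member[OF W2_team]) (use e'(3) exb in simp)
  then show "tw W2 (\<lambda>e. map e u = a \<and> map e xb = a) > 0" using e'(1) by linarith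
  have "tw W2 (\<lambda>e. map e u = a \<and> map e xa = a) \<le> size_wt w / real (card A) ^ m" by (rule B1)
  then have "tw W2 (\<lambda>e. map e u = a \<and> map e xa = a) / nk \<le> size_wt w / real (card A) ^ m / nk"
    by (rule divide_right_mono) (use nk_ge in auto)
  also have "\<dots> \<le> W2 e'" by (rule B2[OF e'(1)])
  finally show "tw W2 (\<lambda>e. map e u = a \<and> map e xa = a) / nk \<le> tw W2 (\<lambda>e. map e u = a \<and> map e xb = a)"
    using ge by linarith
qed

lemma th_bounds:
  assumes e: "W2 e > 0"
  shows "1 / nk \<le> th e" "th e \<le> 1"
proof -
  let ?a = "map e u"
  have nk: "nk \<ge> 2" by (rule nk_ge)
  have Pn: "Pf ?a \<ge> 0" "Qf ?a \<ge> 0" unfolding Pf_def Qf_def using tw_nonneg[OF W2_team] by auto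
  have gen: "1 / nk \<le> min P Q / P \<and> min P Q / P \<le> 1" if "P > 0" "Q \<ge> 0" "P / nk \<le> Q" for P Q :: real
  proof -
    have "P / nk \<le> P" using that(1) nk by (simp add: divide_le_eq)
    then have m1: "P / nk \<le> min P Q" using that by simp
    have "1 / nk = (P / nk) / P" using that(1) by simp
    also have "\<dots> \<le> min P Q / P" by (rule divide_right_mono[OF m1]) (use that(1) in simp)
    finally have g1: "1 / nk \<le> min P Q / P" .
    have "min P Q / P \<le> P / P" by (rule divide_right_mono) (use that(1) in auto)
    then have "min P Q / P \<le> 1" using that(1) by simp
    then show ?thesis using g1 by simp
  qed
  have "1 / nk \<le> th e \<and> th e \<le> 1"
  proof (cases "map e x1 = ?a")
    case True
    have "Pf ?a \<ge> W2 e" unfolding Pf_def by (rule tw_ge_member[OF W2_team]) (use True in simp)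
    then have P: "Pf ?a > 0" using e by linarith
    have "Pf ?a / nk \<le> Qf ?a" using B3(2)[of x1 x2 ?a] P unfolding Pf_def Qf_def by simp
    then show ?thesis using gen[OF P Pn(2)] True P by (simp add: th_def Tf_def)
  next
    case F1: False
    show ?thesis
    proof (cases "map e x2 = ?a")
      case True
      have "Qf ?a \<ge> W2 e" unfolding Qf_def by (rule tw_ge_member[OF W2_team]) (use True in simp)
      then have Q: "Qf ?a > 0" using e by linarith
      have "Qf ?a / nk \<le> Pf ?a" using B3(2)[of x2 x1 ?a] Q unfolding Pf_def Qf_def by simp
      then show ?thesis using gen[OF Q Pn(1)] True F1 Q by (simp add: th_def Tf_def min.commute)
    next
      case False
      then show ?thesis using F1 nk by (simp add: th_def)
    qed
  qed
  then show "1 / nk \<le> th e" "th e \<le> 1" by auto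
qed

lemma gm_bounds: "W2 e > 0 \<Longrightarrow> 0 \<le> gm e \<and> gm e \<le> 1"
  using th_bounds[of e] q_props by (auto simp: gm_def divide_le_eq)

lemma rho_bounds: "W3 r > 0 \<Longrightarrow> 0 \<le> rho r \<and> rho r \<le> 1"
  using gm_bounds[OF W3_supp(3)] by (auto simp: rho_def)

lemma team_scale:
  assumes W: "wteam A H W" and c: "\<forall>t. W t > 0 \<longrightarrow> 0 \<le> c t"
  shows "wteam A H (\<lambda>t. W t * c t)"
proof -
  have nn: "\<forall>t. 0 \<le> W t * c t"
  proof
    fix t show "0 \<le> W t * c t"
    proof (cases "W t > 0")
      case True then show ?thesis using c by simp
    next
      case False then have "W t = 0" using wteam_nonneg[OF W, of t] by simp
      then show ?thesis by simp
    qed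
  qed
  have sub: "{t. W t * c t \<noteq> 0} \<subseteq> {t. W t \<noteq> 0}" by auto
  then have "finite {t. W t * c t \<noteq> 0}" using wteam_fin[OF W] by (rule finite_subset)
  moreover have "\<forall>t. W t * c t \<noteq> 0 \<longrightarrow> dom t = H \<and> ran t \<subseteq> A"
    using wteam_dom[OF W] wteam_ran[OF W] by auto
  ultimately show ?thesis unfolding wteam_def using nn by blast
qed

lemma Y_team: "wteam A H Yt"
proof -
  have "wteam A H (\<lambda>t. W4 t * rho (t |` F))"
    by (rule team_scale[OF W4_team]) (use rho_bounds W4_supp(1) in blast)
  then show ?thesis unfolding Yt_def[abs_def] .
qed

lemma L_team: "wteam A H Lt"
proof -
  have "wteam A H (\<lambda>t. W4 t * (1 - rho (t |` F)))"
    by (rule team_scale[OF W4_team]) (use rho_bounds W4_supp(1) in fastforce)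
  then show ?thesis unfolding Lt_def[abs_def] .
qed

lemma W4_split: "W4 t = Lt t + Yt t" by (simp add: Lt_def Yt_def algebra_simps)

lemma Lt_neg: "Lt t > 0 \<Longrightarrow> map t z \<noteq> map t ys"
proof -
  assume Lp: "Lt t > 0"
  have W4p: "W4 t > 0"
  proof (rule ccontr)
    assume "\<not> W4 t > 0"
    then have "W4 t = 0" using wteam_nonneg[OF W4_team, of t] by simp
    then show False using Lp by (simp add: Lt_def)
  qed
  have "rho (t |` F) \<noteq> 1" using Lp by (auto simp: Lt_def)
  then have "map (t |` F) z0 \<noteq> replicate k ((t |` F) y)" by (auto simp: rho_def)
  then show ?thesis by (rule W4_neg[OF W4p])
qed

lemma margY_F: "marg Yt F r = rho r * W3 r"
proof -
  have "marg Yt F r = marg (\<lambda>t. W4 t * rho (t |` F)) F r" by (simp add: Yt_def[abs_def])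
  also have "\<dots> = rho r * marg W4 F r" by (rule marg_scale[OF W4_team])
  finally show ?thesis using W4_marg by simp
qed

lemma margZ:
  "(\<Sum>r\<in>{r. W3 r \<noteq> 0 \<and> r |` E = e}. if map r z0 = replicate k (r y) then W3 r else 0) = W2 e / nk"
proof (cases "W2 e > 0")
  case False
  have emp: "{r. W3 r \<noteq> 0 \<and> r |` E = e} = {}"
  proof (rule ccontr)
    assume "{r. W3 r \<noteq> 0 \<and> r |` E = e} \<noteq> {}"
    then obtain r where r: "W3 r \<noteq> 0" "r |` E = e" by auto
    then have "W3 r > 0" using wteam_pos[OF W3_team] by blast
    then show False using W3_supp(3) r(2) False by auto
  qed
  have "W2 e = 0" using False wteam_nonneg[OF W2_team, of e] by simp
  then show ?thesis unfolding emp by simp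
next
  case True
  let ?S = "{r. W3 r \<noteq> 0 \<and> r |` E = e}"
  have fin: "finite ?S" using wteam_fin[OF W3_team] by (auto intro: finite_subset)
  have de: "dom e = E" using W2_supp(4)[OF True] .
  have ey: "e y \<in> Some ` A" using W2_vals(5)[OF True] .
  define Yb where "Yb = (\<lambda>x. if x \<in> set z0 then e y else None)"
  define r0 where "r0 = e ++ Yb"
  have dYb: "dom Yb = set z0" using ey by (auto simp: Yb_def split: if_splits)
  have r0E: "r0 |` E = e" unfolding r0_def by (rule restrict_add_disj) (use de dYb b(6) in auto)
  have r0dom: "dom r0 = E \<union> set z0" using de dYb by (auto simp: r0_def)
  have r0z: "r0 x = e y" if "x \<in> set z0" for x
    using that map_add_dom_app_simps(1)[of x Yb e] dYb by (simp add: r0_def Yb_def)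
  have W3r0: "W3 r0 = W2 e / nk"
  proof -
    have "card (set z0) = k" using b(5) lz0 distinct_card by metis
    moreover have "\<forall>x\<in>set z0. r0 x \<in> Some ` A" using r0z ey by auto
    ultimately show ?thesis using r0dom r0E unfolding W3_def L_def nk_def by simp
  qed
  have yE: "y \<in> E" using yu by auto
  have r0y: "r0 y = e y" using r0E yE by (metis restrict_in)
  have r0c: "map r0 z0 = replicate k (r0 y)"
  proof -
    have "map r0 z0 = map (\<lambda>_. e y) z0" by (rule map_cong[OF refl]) (use r0z in auto)
    then show ?thesis using lz0 r0y by (simp add: map_replicate_const)
  qed
  have "(\<Sum>r\<in>?S. if map r z0 = replicate k (r y) then W3 r else 0)
      = (\<Sum>r\<in>{r\<in>?S. map r z0 = replicate k (r y)}. W3 r)"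
    by (rule sum.inter_filter[OF fin, symmetric])
  also have "{r\<in>?S. map r z0 = replicate k (r y)} = {r0}"
  proof
    show "{r0} \<subseteq> {r\<in>?S. map r z0 = replicate k (r y)}"
      using W3r0 True nk_ge r0E r0c by auto
    show "{r\<in>?S. map r z0 = replicate k (r y)} \<subseteq> {r0}"
    proof
      fix r assume "r \<in> {r\<in>?S. map r z0 = replicate k (r y)}"
      then have r: "W3 r \<noteq> 0" "r |` E = e" "map r z0 = replicate k (r y)" by auto
      have rp: "W3 r > 0" using r(1) wteam_pos[OF W3_team] by blast
      have dr: "dom r = F" using W3_supp(1)[OF rp] .
      have ry: "r y = e y" using r(2) yE by (metis restrict_in)
      have "r = r0"
      proof
        fix x show "r x = r0 x"
        proof (cases "x \<in> set z0")
          case True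
          then have "r x \<in> set (map r z0)" by simp
          then have "r x = r y" using r(3) by (simp add: in_set_replicate)
          then show ?thesis using ry r0z True by simp
        next
          case nz: False
          show ?thesis
          proof (cases "x \<in> E")
            case True
            have "r x = e x" using r(2) True by (metis restrict_in)
            moreover have "r0 x = e x" using r0E True by (metis restrict_in)
            ultimately show ?thesis by simp
          next
            case False
            then have "x \<notin> dom r" "x \<notin> dom r0" using dr r0dom nz by auto
            then show ?thesis by (simp add: domIff)
          qed
        qed
      qed
      then show "r \<in> {r0}" by simp
    qed
  qed
  finally show ?thesis using W3r0 by simp
qed

lemma margY_E: "marg Yt E e = W2 e * th e"
proof -
  let ?S = "{r. W3 r \<noteq> 0}"
  let ?Se = "{r\<in>?S. r |` E = e}"
  have fin: "finite ?S" using wteam_fin[OF W3_team] .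
  have EF: "E \<subseteq> F" by auto
  have "marg Yt E e = marg (marg Yt F) E e" by (rule marg_tower[OF Y_team EF, symmetric])
  also have "marg Yt F = (\<lambda>r. rho r * W3 r)" using margY_F by auto
  also have "marg (\<lambda>r. rho r * W3 r) E e = (\<Sum>r\<in>?Se. rho r * W3 r)"
    by (rule marg_superset[OF fin]) auto
  also have "\<dots> = (\<Sum>r\<in>?Se. gm e * W3 r + (1 - gm e) * (if map r z0 = replicate k (r y) then W3 r else 0))"
    by (rule sum.cong[OF refl]) (auto simp: rho_def algebra_simps)
  also have "\<dots> = gm e * (\<Sum>r\<in>?Se. W3 r) + (1 - gm e) * (\<Sum>r\<in>?Se. if map r z0 = replicate k (r y) then W3 r else 0)"
    by (simp add: sum.distrib sum_distrib_left)
  also have "(\<Sum>r\<in>?Se. W3 r) = W2 e"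
    using marg_superset[OF fin, of W3 E e] W3_marg by simp
  also have "(\<Sum>r\<in>?Se. if map r z0 = replicate k (r y) then W3 r else 0) = W2 e / nk"
    using margZ by simp
  also have "gm e * W2 e + (1 - gm e) * (W2 e / nk) = W2 e * (gm e * (1 - 1 / nk) + 1 / nk)"
    using nk_ge by (simp add: field_simps)
  also have "gm e * (1 - 1 / nk) = th e - 1 / nk" unfolding gm_def using q_props by simp
  finally show ?thesis by simp
qed

lemma Asum:
  assumes "finite S" "\<forall>e\<in>S. W2 e \<noteq> 0 \<and> map e u = a" "\<forall>e\<in>S. map e xa = a \<longrightarrow> th e = cc"
    "{e. W2 e \<noteq> 0 \<and> map e u = a \<and> map e xa = a} = {e\<in>S. map e xa = a}"
  shows "(\<Sum>e\<in>S. if map e xa = a then W2 e * th e else 0) = cc * tw W2 (\<lambda>e. map e u = a \<and> map e xa = a)"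
proof -
  have "(\<Sum>e\<in>S. if map e xa = a then W2 e * th e else 0) = (\<Sum>e\<in>S. cc * (if map e xa = a then W2 e else 0))"
    by (rule sum.cong[OF refl]) (use assms(3) in auto)
  also have "\<dots> = cc * (\<Sum>e\<in>S. if map e xa = a then W2 e else 0)" by (simp add: sum_distrib_left)
  also have "(\<Sum>e\<in>S. if map e xa = a then W2 e else 0) = (\<Sum>e\<in>{e\<in>S. map e xa = a}. W2 e)"
    by (rule sum.inter_filter[OF assms(1), symmetric])
  also have "\<dots> = tw W2 (\<lambda>e. map e u = a \<and> map e xa = a)" unfolding tw_def using assms(4) by simp
  finally show ?thesis .
qed

lemma PQ0: "Pf a \<ge> 0" "Qf a \<ge> 0" unfolding Pf_def Qf_def by (rule tw_nonneg[OF W2_team])+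

lemma PT: "(if Pf a = 0 then 1 else Tf a / Pf a) * Pf a = Tf a"
  using PQ0[of a] by (cases "Pf a = 0") (auto simp: Tf_def min_def)

lemma QT: "(if Qf a = 0 then 1 else Tf a / Qf a) * Qf a = Tf a"
  using PQ0[of a] by (cases "Qf a = 0") (auto simp: Tf_def min_def)

lemma MargY: "sat A H Yt (MargId (u @ [v1]) (u @ [v2]))"
proof -
  obtain j where j: "j < m" "u ! j = y" using yu lu by (metis in_set_conv_nth)
  have main: "tw Yt (\<lambda>t. map t (u @ [v1]) = map Some as) = tw Yt (\<lambda>t. map t (u @ [v2]) = map Some as)"
    if as: "length as = Suc m" "set as \<subseteq> A" for as
  proof -
    obtain as0 bb where asd: "as = as0 @ [bb]" "length as0 = m" using as(1) by (metis length_Suc_conv_rev)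
    let ?a = "map Some as0"
    let ?xi = "?a ! j"
    let ?f = "\<lambda>e. W2 e * th e"
    let ?S2 = "{e. W2 e \<noteq> 0}"
    let ?Sa = "{e\<in>?S2. map e u = ?a}"
    have finS2: "finite ?S2" using wteam_fin[OF W2_team] .
    have finSa: "finite ?Sa" using finS2 by auto
    have mY: "marg Yt E = ?f" using margY_E by auto
    have ey: "e y = ?xi" if "map e u = ?a" for e
    proof -
      have "map e u ! j = e y" using j lu by simp
      then show ?thesis using that by simp
    qed
    have red: "tw Yt (\<lambda>t. map t (u @ [vv]) = map Some as) = (\<Sum>e\<in>?Sa. if e vv = Some bb then ?f e else 0)"
      if vv: "vv \<in> E" for vv
    proof -
      have uE: "set u \<subseteq> E" by auto
      have "(\<lambda>t. map t (u @ [vv]) = map Some as) = (\<lambda>t. (\<lambda>e. map e u = ?a \<and> e vv = Some bb) (t |` E))"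
      proof (rule ext)
        fix t
        show "(map t (u @ [vv]) = map Some as) = (\<lambda>e. map e u = ?a \<and> e vv = Some bb) (t |` E)"
          unfolding map_restr[OF uE, of t] using asd vv by simp
      qed
      then have "tw Yt (\<lambda>t. map t (u @ [vv]) = map Some as) = tw (marg Yt E) (\<lambda>e. map e u = ?a \<and> e vv = Some bb)"
        using tw_tower[OF Y_team, of "\<lambda>e. map e u = ?a \<and> e vv = Some bb" E] by simp
      also have "\<dots> = (\<Sum>e\<in>{e\<in>?S2. map e u = ?a \<and> e vv = Some bb}. ?f e)"
        unfolding mY by (rule tw_superset[OF finS2]) auto
      also have "{e\<in>?S2. map e u = ?a \<and> e vv = Some bb} = {e\<in>?Sa. e vv = Some bb}" by auto
      also have "(\<Sum>e\<in>{e\<in>?Sa. e vv = Some bb}. ?f e) = (\<Sum>e\<in>?Sa. if e vv = Some bb then ?f e else 0)"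
        by (rule sum.inter_filter[OF finSa])
      finally show ?thesis .
    qed
    have posSa: "W2 e > 0" if "e \<in> ?Sa" for e using that wteam_pos[OF W2_team] by auto
    have h1: "\<forall>e\<in>?Sa. e v1 = (if map e x1 = ?a then ?xi else Some (cv ?xi))"
    proof
      fix e assume e: "e \<in> ?Sa"
      have v: "e v1 = (if map e x1 = map e u then e y else Some (cv (e y)))" by (rule W2_vals(1)[OF posSa[OF e]])
      have mu: "map e u = ?a" using e by simp
      have "e y = ?xi" by (rule ey[OF mu])
      then show "e v1 = (if map e x1 = ?a then ?xi else Some (cv ?xi))" using v mu by simp
    qed
    have h2: "\<forall>e\<in>?Sa. e v2 = (if map e x2 = ?a then ?xi else Some (cv ?xi))"
    proof
      fix e assume e: "e \<in> ?Sa"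
      have v: "e v2 = (if map e x2 = map e u then e y else Some (cv (e y)))" by (rule W2_vals(2)[OF posSa[OF e]])
      have mu: "map e u = ?a" using e by simp
      have "e y = ?xi" by (rule ey[OF mu])
      then show "e v2 = (if map e x2 = ?a then ?xi else Some (cv ?xi))" using v mu by simp
    qed
    have A1: "(\<Sum>e\<in>?Sa. if map e x1 = ?a then ?f e else 0) = Tf ?a"
    proof -
      have "(\<Sum>e\<in>?Sa. if map e x1 = ?a then ?f e else 0)
          = (if Pf ?a = 0 then 1 else Tf ?a / Pf ?a) * tw W2 (\<lambda>e. map e u = ?a \<and> map e x1 = ?a)"
        by (rule Asum[OF finSa]) (auto simp: th_def)
      then show ?thesis using PT unfolding Pf_def by simp
    qed
    have A2: "(\<Sum>e\<in>?Sa. if map e x2 = ?a then ?f e else 0) = Tf ?a"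
    proof -
      have x12: "\<forall>e\<in>?Sa. map e x2 = ?a \<longrightarrow> map e x1 \<noteq> map e u"
      proof (intro ballI impI)
        fix e assume e: "e \<in> ?Sa" "map e x2 = ?a"
        have "map e x1 \<noteq> map e x2" by (rule W2_x12[OF posSa[OF e(1)]])
        then show "map e x1 \<noteq> map e u" using e by simp
      qed
      have "(\<Sum>e\<in>?Sa. if map e x2 = ?a then ?f e else 0)
          = (if Qf ?a = 0 then 1 else Tf ?a / Qf ?a) * tw W2 (\<lambda>e. map e u = ?a \<and> map e x2 = ?a)"
        by (rule Asum[OF finSa]) (use x12 in \<open>auto simp: th_def\<close>)
      then show ?thesis using QT unfolding Qf_def by simp
    qed
    have "tw Yt (\<lambda>t. map t (u @ [v1]) = map Some as) = (\<Sum>e\<in>?Sa. if e v1 = Some bb then ?f e else 0)"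
      by (rule red) simp
    also have "\<dots> = of_bool (?xi = Some bb) * Tf ?a + of_bool (Some (cv ?xi) = Some bb) * ((\<Sum>e\<in>?Sa. ?f e) - Tf ?a)"
      using sum_split_if[OF finSa h1, of "Some bb" ?f] A1 by simp
    also have "\<dots> = (\<Sum>e\<in>?Sa. if e v2 = Some bb then ?f e else 0)"
      using sum_split_if[OF finSa h2, of "Some bb" ?f] A2 by simp
    also have "\<dots> = tw Yt (\<lambda>t. map t (u @ [v2]) = map Some as)"
      by (rule red[symmetric]) simp
    finally show ?thesis .
  qed
  show ?thesis using main lu by simp
qed

lemma sat_Mx: "sat A H W4 Mx"
proof -
  have qe: "qf (eqs a c)" for a c :: "'v list" by (rule qf_eqs)
  have q1: "qf (iff (eqs x1 u) (Eq v1 y))" by (simp add: qf_iff qf_eqs)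
  have q2: "qf (iff (eqs x2 u) (Eq v2 y))" by (simp add: qf_iff qf_eqs)
  have q3: "qf (imp (eqs z0 ys) (eqs z ys))" by (simp add: qf_imp qf_eqs)
  have q4: "qf (fo_neg (eqs z ys))" by (simp add: qf_fo_neg qf_eqs)
  have s1: "sat A H W4 (iff (eqs x1 u) (Eq v1 y))"
    unfolding flat[OF q1 W4_team]
    using W4_iff(1) by (simp add: holds_iff2[OF qe, of "Eq v1 y"] holds_eqs[of x1 u] l1 lu)
  have s2: "sat A H W4 (iff (eqs x2 u) (Eq v2 y))"
    unfolding flat[OF q2 W4_team]
    using W4_iff(2) by (simp add: holds_iff2[OF qe, of "Eq v2 y"] holds_eqs[of x2 u] l2 lu)
  have s3: "sat A H W4 (imp (eqs z0 ys) (eqs z ys))"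
    unfolding flat[OF q3 W4_team]
    using W4_imp by (simp add: holds_imp2[OF qe qe] holds_eqs[of z0 ys] holds_eqs[of z ys] lz0 lz)
  have sL: "sat A H Lt (fo_neg (eqs z ys))"
    unfolding flat[OF q4 L_team]
    using Lt_neg by (simp add: holds_neg[OF qe] holds_eqs[of z ys] lz)
  have s4: "sat A H W4 (Or (fo_neg (eqs z ys)) (MargId (u @ [v1]) (u @ [v2])))"
    unfolding sat.simps(4) using L_team Y_team W4_split sL MargY by blast
  show ?thesis unfolding sat.simps(3) using s1 s2 s3 s4 by blast
qed

lemma part1: "sat A D w (psi x1 x2 u v1 v2 z0 z y)"
proof -
  have a3: "sat A F W3 (Exs z Mx)"
    by (rule sat_Exs_intro[OF W3_team b(7) b(8) W4_team _ sat_Mx]) (use W4_marg in auto)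
  have a2: "sat A E W2 (Alls z0 (Exs z Mx))"
    using iffD2[OF sat_Alls[OF W2_team b(10) fA b(5) b(6)]] a3 unfolding W3_def by blast
  have a1: "sat A D0 W0 (Exs [v1, v2] (Alls z0 (Exs z Mx)))"
    by (rule sat_Exs_intro[OF W0_team b(3) b(4) W2_team _ a2]) (use W2_marg in auto)
  have "sat A D w (Alls u (Exs [v1, v2] (Alls z0 (Exs z Mx))))"
    using iffD2[OF sat_Alls[OF w fD fA b(1) b(2)]] a1 unfolding W0_def by blast
  then show ?thesis unfolding psi_eq .
qed

end

theorem mainTheorem13:
  fixes A :: "'a set" and D :: "'v set" and w :: "('v, 'a) assign \<Rightarrow> real"
    and k m :: nat and x1 x2 u z0 z :: "'v list" and v1 v2 y :: 'v
  assumes "k > 0"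
    and "finite A" and "A \<noteq> {}"
    and "finite D" and "wteam A D w"
    and "length x1 = m" and "length x2 = m" and "length u = m"
    and "length z0 = k" and "length z = k"
    and "set x1 \<union> set x2 \<subseteq> D"
    and "distinct (u @ [v1, v2] @ z0 @ z)"
    and "set (u @ [v1, v2] @ z0 @ z) \<inter> D = {}"
    and "y \<in> set u"
  shows "(sat A D w (And (Incl x1 x2) (Incl x2 x1))
           \<and> tw w (\<lambda>s. map s x1 = map s x2) = 0
           \<and> (\<forall>s. w s > 0 \<longrightarrow> w s \<ge> size_wt w / real (card A) ^ k)
           \<longrightarrow> sat A D w (psi x1 x2 u v1 v2 z0 z y))
       \<and> (sat A D w (psi x1 x2 u v1 v2 z0 z y)
           \<longrightarrow> sat A D w (And (Incl x1 x2) (Incl x2 x1)))"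
proof -
  interpret setting A D w k m x1 x2 u z0 z v1 v2 y by unfold_locales (use assms in auto)
  show ?thesis
  proof (intro conjI impI)
    assume h: "sat A D w (And (Incl x1 x2) (Incl x2 x1))
           \<and> tw w (\<lambda>s. map s x1 = map s x2) = 0
           \<and> (\<forall>s. w s > 0 \<longrightarrow> w s \<ge> size_wt w / real (card A) ^ k)"
    show "sat A D w (psi x1 x2 u v1 v2 z0 z y)"
    proof (cases "2 \<le> card A")
      case True
      interpret s2: setting2 A D w k m x1 x2 u z0 z v1 v2 y
        by unfold_locales (use True h in auto)
      show ?thesis by (rule s2.part1)
    next
      case False
      have "card A > 0" using assms(2,3) by (simp add: card_gt_0_iff)
      then have "card A = 1" using False by linarith
      then obtain a where a: "A = {a}" by (rule card_1_singletonE)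
      have w0: "w = (\<lambda>_. 0)"
      proof (rule ext, rule ccontr)
        fix s assume ne: "w s \<noteq> 0"
        then have ws: "w s > 0" using wteam_pos[OF assms(5)] by blast
        have ds: "dom s = D" "ran s \<subseteq> A" using wteam_dom[OF assms(5) ne] wteam_ran[OF assms(5) ne] by auto
        have sa: "s x = Some a" if xin: "x \<in> D" for x
        proof -
          obtain b where "s x = Some b" using ds(1) xin by auto
          then show ?thesis using ds(2) a by (auto simp: ran_def)
        qed
        have "map s x1 = map s x2"
        proof (rule nth_equalityI)
          show "length (map s x1) = length (map s x2)" using assms(6,7) by simp
          fix i assume "i < length (map s x1)"
          then have i: "i < m" using assms(6) by simp
          have "x1 ! i \<in> set x1" "x2 ! i \<in> set x2" using i assms(6,7) by simp_all
          then have "x1 ! i \<in> D" "x2 ! i \<in> D" using assms(11) by blast+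
          then show "map s x1 ! i = map s x2 ! i" using sa i assms(6,7) by simp
        qed
        then have "tw w (\<lambda>s. map s x1 = map s x2) > 0" using tw_pos[OF assms(5)] ws by blast
        then show False using h by simp
      qed
      show ?thesis unfolding w0 by (rule sat_zero)
    qed
  next
    assume "sat A D w (psi x1 x2 u v1 v2 z0 z y)"
    then show "sat A D w (And (Incl x1 x2) (Incl x2 x1))" by (rule part2)
  qed
qed

end
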